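(* Let $\Phi\colon\mathcal{M}(2;\mathbb{C})\dashrightarrow\mathcal{M}(2;\mathbb{C})$ be a rational transformation compatible with conjugation. Then $\Phi$ is birational if and only if $\mathrm{Sq}\,\Phi$ is birational.
   Context: $\mathrm{Inv}\colon\mathcal{M}(2;\mathbb{C})\to\mathbb{C}^2$, $\mathrm{M}\mapsto(\mathrm{tr}\,\mathrm{M},\det\mathrm{M})$. $\Phi$ is compatible with conjugation if $\mathrm{A}\Phi(\mathrm{M})\mathrm{A}^{-1}=\Phi(\mathrm{A}\mathrm{M}\mathrm{A}^{-1})$ for all $\mathrm{A}\in\mathrm{GL}(2;\mathbb{C})$ whenever both sides are defined; for such $\Phi$ there is a rational map $\mathrm{Sq}\,\Phi\colon\mathbb{C}^2\dashrightarrow\mathbb{C}^2$ with $\mathrm{Inv}\circ\Phi=\mathrm{Sq}\,\Phi\circ\mathrm{Inv}$. *)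

theory Defs
  imports "HOL-Analysis.Analysis"
begin

text \<open>Polynomial functions on a space whose coordinate functions are given by a set C
  (for C^n: the projections; for 2x2 matrices: the four entries).\<close>
inductive polyfun :: "('a \<Rightarrow> complex) set \<Rightarrow> ('a \<Rightarrow> complex) \<Rightarrow> bool"
  for C :: "('a \<Rightarrow> complex) set" where
  coord: "c \<in> C \<Longrightarrow> polyfun C c"
| const: "polyfun C (\<lambda>x. a)"
| add: "polyfun C p \<Longrightarrow> polyfun C q \<Longrightarrow> polyfun C (\<lambda>x. p x + q x)"
| mult: "polyfun C p \<Longrightarrow> polyfun C q \<Longrightarrow> polyfun C (\<lambda>x. p x * q x)"

definition mat_coords :: "(complex^2^2 \<Rightarrow> complex) set" where
  "mat_coords = {(\<lambda>M. M $ i $ j) | i j. True}"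

definition vec_coords :: "(complex^2 \<Rightarrow> complex) set" where
  "vec_coords = {(\<lambda>v. v $ i) | i. True}"

text \<open>A property holds generically: on the complement of the zero set of a
  nonzero polynomial (a nonempty Zariski open set).\<close>
definition generically :: "('a \<Rightarrow> complex) set \<Rightarrow> ('a \<Rightarrow> bool) \<Rightarrow> bool" where
  "generically C P \<longleftrightarrow>
     (\<exists>r. polyfun C r \<and> (\<exists>x. r x \<noteq> 0) \<and> (\<forall>x. r x \<noteq> 0 \<longrightarrow> P x))"

text \<open>f is a rational map with common denominator q: q is a nonzero polynomial and on
  the set where q does not vanish every coordinate of f equals p/q for a polynomial p.
  Values of f where q vanishes are irrelevant.\<close>
definition rational_map ::
  "('a \<Rightarrow> complex) set \<Rightarrow> ('b \<Rightarrow> complex) set \<Rightarrow> ('a \<Rightarrow> 'b) \<Rightarrow> ('a \<Rightarrow> complex) \<Rightarrow> bool" where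
  "rational_map CX CY f q \<longleftrightarrow>
     polyfun CX q \<and> (\<exists>x. q x \<noteq> 0) \<and>
     (\<forall>c\<in>CY. \<exists>p. polyfun CX p \<and> (\<forall>x. q x \<noteq> 0 \<longrightarrow> c (f x) = p x / q x))"

definition birational ::
  "('a \<Rightarrow> complex) set \<Rightarrow> ('b \<Rightarrow> complex) set \<Rightarrow> ('a \<Rightarrow> 'b) \<Rightarrow> ('a \<Rightarrow> complex) \<Rightarrow> bool" where
  "birational CX CY f q \<longleftrightarrow>
     (\<exists>g qg. rational_map CY CX g qg \<and>
        generically CX (\<lambda>x. q x \<noteq> 0 \<and> qg (f x) \<noteq> 0 \<and> g (f x) = x) \<and>
        generically CY (\<lambda>y. qg y \<noteq> 0 \<and> q (g y) \<noteq> 0 \<and> f (g y) = y))"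

definition Inv :: "complex^2^2 \<Rightarrow> complex^2" where
  "Inv M = vector [trace M, det M]"

definition compatible_with_conjugation :: "(complex^2^2 \<Rightarrow> complex^2^2) \<Rightarrow> bool" where
  "compatible_with_conjugation \<Phi> \<longleftrightarrow>
     (\<forall>A :: complex^2^2. invertible A \<longrightarrow>
        generically mat_coords (\<lambda>M. A ** \<Phi> M ** matrix_inv A = \<Phi> (A ** M ** matrix_inv A)))"

end

theory Submission
  imports Defs "HOL-Computational_Algebra.Polynomial"
begin


lemma polyfun_cmult: "polyfun C p \<Longrightarrow> polyfun C (\<lambda>x. c * p x)"
  by (rule polyfun.mult[OF polyfun.const])

lemma polyfun_minus: "polyfun C p \<Longrightarrow> polyfun C (\<lambda>x. - p x)"
  using polyfun_cmult[of C p "-1"] by simp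

lemma polyfun_diff: "polyfun C p \<Longrightarrow> polyfun C q \<Longrightarrow> polyfun C (\<lambda>x. p x - q x)"
  using polyfun.add[OF _ polyfun_minus] by simp

lemma polyfun_pow: "polyfun C p \<Longrightarrow> polyfun C (\<lambda>x. p x ^ n)"
  by (induction n) (auto intro: polyfun.const polyfun.mult)

lemma polyfun_sum: "finite S \<Longrightarrow> (\<And>s. s \<in> S \<Longrightarrow> polyfun C (f s)) \<Longrightarrow> polyfun C (\<lambda>x. \<Sum>s\<in>S. f s x)"
  by (induction S rule: finite_induct) (auto intro: polyfun.const polyfun.add)

definition lines :: "('a \<Rightarrow> complex) set \<Rightarrow> bool" where
  "lines C \<longleftrightarrow> (\<forall>x y. \<exists>L. L 0 = x \<and> L 1 = y \<and> (\<forall>c\<in>C. \<exists>a b. \<forall>t. c (L t) = a + b * t))"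

lemma polyfun_line:
  assumes "polyfun C r" "\<forall>c\<in>C. \<exists>a b. \<forall>t. c (L t) = a + b * t"
  shows "\<exists>p. \<forall>t. r (L t) = poly p t"
  using assms(1)
proof induction
  case (coord c)
  then obtain a b where "\<forall>t. c (L t) = a + b * t" using assms(2) by blast
  then show ?case by (intro exI[of _ "[:a, b:]"]) simp
next
  case (const a)
  then show ?case by (intro exI[of _ "[:a:]"]) simp
next
  case (add p q)
  then obtain p1 q1 where "\<forall>t. p (L t) = poly p1 t" "\<forall>t. q (L t) = poly q1 t" by blast
  then show ?case by (intro exI[of _ "p1 + q1"]) simp
next
  case (mult p q)
  then obtain p1 q1 where "\<forall>t. p (L t) = poly p1 t" "\<forall>t. q (L t) = poly q1 t" by blast
  then show ?case by (intro exI[of _ "p1 * q1"]) simp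
qed

lemma T1:
  assumes "lines C" "polyfun C r" "polyfun C s" "r x \<noteq> 0" "s y \<noteq> 0"
  shows "\<exists>z. r z \<noteq> 0 \<and> s z \<noteq> 0"
proof -
  obtain L where L: "L 0 = x" "L 1 = y" "\<forall>c\<in>C. \<exists>a b. \<forall>t. c (L t) = a + b * t"
    using assms(1) unfolding lines_def by blast
  obtain pr where pr: "\<forall>t. r (L t) = poly pr t" using polyfun_line[OF assms(2) L(3)] by blast
  obtain ps where ps: "\<forall>t. s (L t) = poly ps t" using polyfun_line[OF assms(3) L(3)] by blast
  have "poly pr 0 \<noteq> 0" using pr L assms by metis
  hence "pr \<noteq> 0" by auto
  have "poly ps 1 \<noteq> 0" using ps L assms by metis
  hence "ps \<noteq> 0" by auto
  hence "pr * ps \<noteq> 0" using \<open>pr \<noteq> 0\<close> by simp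
  hence "finite {t. poly (pr * ps) t = 0}" by (rule poly_roots_finite)
  moreover have "infinite (UNIV :: complex set)" by (rule infinite_UNIV_char_0)
  ultimately obtain t where "t \<notin> {t. poly (pr * ps) t = 0}"
    by (metis (mono_tags, lifting) UNIV_I ex_new_if_finite)
  hence "r (L t) \<noteq> 0 \<and> s (L t) \<noteq> 0" using pr ps by simp
  thus ?thesis by blast
qed

lemma gen_conj:
  assumes "lines C" "generically C P" "generically C Q"
  shows "generically C (\<lambda>x. P x \<and> Q x)"
proof -
  obtain r x where r: "polyfun C r" "r x \<noteq> 0" "\<forall>x. r x \<noteq> 0 \<longrightarrow> P x"
    using assms(2) unfolding generically_def by blast
  obtain s y where s: "polyfun C s" "s y \<noteq> 0" "\<forall>x. s x \<noteq> 0 \<longrightarrow> Q x"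
    using assms(3) unfolding generically_def by blast
  obtain z where "r z \<noteq> 0 \<and> s z \<noteq> 0" using T1[OF assms(1) r(1) s(1) r(2) s(2)] by blast
  thus ?thesis unfolding generically_def using r s
    by (intro exI[of _ "\<lambda>x. r x * s x"]) (auto intro: polyfun.mult)
qed

lemma gen_mono: "generically C P \<Longrightarrow> (\<And>x. P x \<Longrightarrow> Q x) \<Longrightarrow> generically C Q"
  unfolding generically_def by blast

lemma gen_ex: "generically C P \<Longrightarrow> \<exists>x. P x"
  unfolding generically_def by blast

lemma gen_poly: "polyfun C r \<Longrightarrow> r x \<noteq> 0 \<Longrightarrow> generically C (\<lambda>x. r x \<noteq> 0)"
  unfolding generically_def by blast

lemma gen_all: "(\<And>x. P x) \<Longrightarrow> generically C P"
  unfolding generically_def by (intro exI[of _ "\<lambda>x. 1"]) (auto intro: polyfun.const)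

lemma vanish:
  assumes "lines C" "polyfun C p" "generically C (\<lambda>x. p x = 0)"
  shows "p x = 0"
proof (rule ccontr)
  assume "p x \<noteq> 0"
  obtain r y where r: "polyfun C r" "r y \<noteq> 0" "\<forall>x. r x \<noteq> 0 \<longrightarrow> p x = 0"
    using assms(3) unfolding generically_def by blast
  from T1[OF assms(1) r(1) assms(2) r(2) \<open>p x \<noteq> 0\<close>] r(3) show False by blast
qed




definition ratf :: "('a \<Rightarrow> complex) set \<Rightarrow> ('a \<Rightarrow> complex) \<Rightarrow> ('a \<Rightarrow> complex) \<Rightarrow> bool" where
  "ratf C D g \<longleftrightarrow> (\<exists>n h. polyfun C h \<and> (\<forall>x. D x \<noteq> 0 \<longrightarrow> g x = h x / D x ^ n))"

definition ratm :: "('a \<Rightarrow> complex) set \<Rightarrow> ('b \<Rightarrow> complex) set \<Rightarrow> ('a \<Rightarrow> complex) \<Rightarrow> ('a \<Rightarrow> 'b) \<Rightarrow> bool" where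
  "ratm CX CY D f \<longleftrightarrow> (\<forall>c\<in>CY. ratf CX D (\<lambda>x. c (f x)))"

lemma ratf_poly: "polyfun C g \<Longrightarrow> ratf C D g"
  unfolding ratf_def by (intro exI[of _ 0] exI[of _ g]) simp

lemma ratf_const: "ratf C D (\<lambda>x. a)"
  by (rule ratf_poly[OF polyfun.const])

lemma ratf_add:
  assumes "polyfun C D" "ratf C D f" "ratf C D g" shows "ratf C D (\<lambda>x. f x + g x)"
proof -
  obtain n1 h1 where 1: "polyfun C h1" "\<forall>x. D x \<noteq> 0 \<longrightarrow> f x = h1 x / D x ^ n1"
    using assms(2) unfolding ratf_def by blast
  obtain n2 h2 where 2: "polyfun C h2" "\<forall>x. D x \<noteq> 0 \<longrightarrow> g x = h2 x / D x ^ n2"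
    using assms(3) unfolding ratf_def by blast
  show ?thesis unfolding ratf_def
  proof (intro exI conjI allI impI)
    show "polyfun C (\<lambda>x. h1 x * D x ^ n2 + h2 x * D x ^ n1)"
      using 1 2 assms(1) by (intro polyfun.add polyfun.mult polyfun_pow)
    fix x assume "D x \<noteq> 0"
    thus "f x + g x = (h1 x * D x ^ n2 + h2 x * D x ^ n1) / D x ^ (n1 + n2)"
      using 1 2 by (simp add: field_simps power_add)
  qed
qed

lemma ratf_mult:
  assumes "ratf C D f" "ratf C D g" shows "ratf C D (\<lambda>x. f x * g x)"
proof -
  obtain n1 h1 where 1: "polyfun C h1" "\<forall>x. D x \<noteq> 0 \<longrightarrow> f x = h1 x / D x ^ n1"
    using assms(1) unfolding ratf_def by blast
  obtain n2 h2 where 2: "polyfun C h2" "\<forall>x. D x \<noteq> 0 \<longrightarrow> g x = h2 x / D x ^ n2"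
    using assms(2) unfolding ratf_def by blast
  show ?thesis unfolding ratf_def
  proof (intro exI conjI allI impI)
    show "polyfun C (\<lambda>x. h1 x * h2 x)"
      using 1 2 by (intro polyfun.mult)
    fix x assume "D x \<noteq> 0"
    thus "f x * g x = (h1 x * h2 x) / D x ^ (n1 + n2)"
      using 1 2 by (simp add: field_simps power_add)
  qed
qed

lemma ratf_minus: "ratf C D f \<Longrightarrow> ratf C D (\<lambda>x. - f x)"
  using ratf_mult[OF ratf_const[of C D "-1"]] by simp

lemma ratf_diff: "polyfun C D \<Longrightarrow> ratf C D f \<Longrightarrow> ratf C D g \<Longrightarrow> ratf C D (\<lambda>x. f x - g x)"
  using ratf_add[OF _ _ ratf_minus] by simp

lemma ratf_pow: "ratf C D f \<Longrightarrow> ratf C D (\<lambda>x. f x ^ n)"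
  by (induction n) (auto intro: ratf_const ratf_mult)

lemma ratf_sum:
  assumes "polyfun C D" "finite S" "\<And>s. s \<in> S \<Longrightarrow> ratf C D (f s)"
  shows "ratf C D (\<lambda>x. \<Sum>s\<in>S. f s x)"
  using assms(2,3) by (induction S rule: finite_induct) (auto intro!: ratf_const ratf_add[OF assms(1)])

lemma ratf_cong: "(\<And>x. D x = D' x) \<Longrightarrow> ratf C D f \<Longrightarrow> ratf C D' f"
proof -
  assume "\<And>x. D x = D' x" hence "D = D'" by auto
  thus "ratf C D f \<Longrightarrow> ratf C D' f" by simp
qed

lemma ratf_fcong: "(\<And>x. D x \<noteq> 0 \<Longrightarrow> f x = g x) \<Longrightarrow> ratf C D f \<Longrightarrow> ratf C D g"
  unfolding ratf_def by metis

lemma ratf_mono: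
  assumes "polyfun C E" "ratf C D f" shows "ratf C (\<lambda>x. D x * E x) f"
proof -
  obtain n h where 1: "polyfun C h" "\<forall>x. D x \<noteq> 0 \<longrightarrow> f x = h x / D x ^ n"
    using assms(2) unfolding ratf_def by blast
  show ?thesis unfolding ratf_def
  proof (intro exI conjI allI impI)
    show "polyfun C (\<lambda>x. h x * E x ^ n)"
      using 1 assms(1) by (intro polyfun.mult polyfun_pow)
    fix x assume "D x * E x \<noteq> 0"
    thus "f x = h x * E x ^ n / (D x * E x) ^ n"
      using 1 by (simp add: field_simps power_mult_distrib)
  qed
qed

lemma ratf_mono2:
  assumes "polyfun C E" "ratf C D f" shows "ratf C (\<lambda>x. E x * D x) f"
  using ratf_mono[OF assms] by (rule ratf_cong[rotated]) simp

lemma ratf_div_rep: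
  assumes "polyfun C D" "polyfun C k" "ratf C D f" "\<forall>x. D x \<noteq> 0 \<longrightarrow> g x = k x / D x ^ m"
  shows "ratf C (\<lambda>x. D x * k x) (\<lambda>x. f x / g x)"
proof -
  obtain n h where 1: "polyfun C h" "\<forall>x. D x \<noteq> 0 \<longrightarrow> f x = h x / D x ^ n"
    using assms(3) unfolding ratf_def by blast
  show ?thesis unfolding ratf_def
  proof (intro exI conjI allI impI)
    show "polyfun C (\<lambda>x. h x * D x ^ (m + 1) * k x ^ n)"
      using 1 assms by (intro polyfun.mult polyfun_pow)
    fix x assume x: "D x * k x \<noteq> 0"
    have f: "f x = h x / D x ^ n" and g: "g x = k x / D x ^ m" using 1 assms(4) x by auto
    show "f x / g x = h x * D x ^ (m + 1) * k x ^ n / (D x * k x) ^ (n + 1)"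
      unfolding f g using x by (simp add: field_simps power_mult_distrib power_add)
  qed
qed

lemma ratf_div_poly:
  assumes "polyfun C D" "polyfun C k" "ratf C D f"
  shows "ratf C (\<lambda>x. D x * k x) (\<lambda>x. f x / k x)"
  using ratf_div_rep[OF assms, of k 0] by simp

lemma ratf_polyfun: "ratf C (\<lambda>x. 1) g \<Longrightarrow> polyfun C g"
proof -
  assume "ratf C (\<lambda>x. 1) g"
  then obtain n h where "polyfun C h" "\<forall>x. g x = h x" unfolding ratf_def by auto
  moreover hence "g = h" by auto
  ultimately show ?thesis by simp
qed

lemma ratf_comp_poly:
  assumes "polyfun CX D" "ratm CX CY D f" "polyfun CY p"
  shows "ratf CX D (\<lambda>x. p (f x))"
  using assms(3)
proof induction
  case (coord c) thus ?case using assms(2) unfolding ratm_def by blast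
next
  case (const a) thus ?case by (rule ratf_const)
next
  case (add p q) thus ?case using assms(1) by (intro ratf_add)
next
  case (mult p q) thus ?case by (intro ratf_mult)
qed

lemma polyfun_comp:
  assumes "ratm CX CY (\<lambda>x. 1) f" "polyfun CY p"
  shows "polyfun CX (\<lambda>x. p (f x))"
  by (rule ratf_polyfun, rule ratf_comp_poly[OF polyfun.const assms])

lemma ratf_comp:
  assumes "polyfun CX D" "ratm CX CY D f" "ratf CY E g" "polyfun CX k"
    "\<forall>x. D x \<noteq> 0 \<longrightarrow> E (f x) = k x / D x ^ m"
  shows "ratf CX (\<lambda>x. D x * k x) (\<lambda>x. g (f x))"
proof -
  obtain n h where 1: "polyfun CY h" "\<forall>y. E y \<noteq> 0 \<longrightarrow> g y = h y / E y ^ n"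
    using assms(3) unfolding ratf_def by blast
  have hf: "ratf CX D (\<lambda>x. h (f x))" by (rule ratf_comp_poly[OF assms(1,2) 1(1)])
  have kn: "\<forall>x. D x \<noteq> 0 \<longrightarrow> E (f x) ^ n = k x ^ n / D x ^ (m * n)"
    using assms(5) by (simp add: power_divide power_mult)
  have "ratf CX (\<lambda>x. D x * k x ^ n) (\<lambda>x. h (f x) / E (f x) ^ n)"
    by (rule ratf_div_rep[OF assms(1) polyfun_pow[OF assms(4)] hf kn])
  hence "ratf CX (\<lambda>x. D x * k x ^ n * k x) (\<lambda>x. h (f x) / E (f x) ^ n)"
    by (rule ratf_mono[OF assms(4)])
  hence r: "ratf CX (\<lambda>x. D x * k x ^ n * k x * D x ^ n) (\<lambda>x. h (f x) / E (f x) ^ n)"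
    by (rule ratf_mono[OF polyfun_pow[OF assms(1)]])
  have r2: "ratf CX (\<lambda>x. (D x * k x) ^ (n+1)) (\<lambda>x. h (f x) / E (f x) ^ n)"
    by (rule ratf_cong[OF _ r]) (simp add: power_mult_distrib algebra_simps)
  show ?thesis
  proof -
    obtain n' h' where 2: "polyfun CX h'" "\<forall>x. (D x * k x) ^ (n+1) \<noteq> 0 \<longrightarrow> h (f x) / E (f x) ^ n = h' x / ((D x * k x) ^ (n+1)) ^ n'"
      using r2 unfolding ratf_def by blast
    show ?thesis unfolding ratf_def
    proof (intro exI conjI allI impI)
      show "polyfun CX h'" by fact
      fix x assume "D x * k x \<noteq> 0"
      hence "E (f x) \<noteq> 0" using assms(5) by auto
      hence "g (f x) = h (f x) / E (f x) ^ n" using 1 by auto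
      also have "\<dots> = h' x / ((D x * k x) ^ (n+1)) ^ n'"
        using 2 \<open>D x * k x \<noteq> 0\<close> by simp
      finally show "g (f x) = h' x / (D x * k x) ^ ((n+1) * n')"
        by (simp only: power_mult)
    qed
  qed
qed

lemma ratf_den_comp:
  assumes "polyfun CX D" "ratm CX CY D f" "polyfun CY E"
  shows "\<exists>k m. polyfun CX k \<and> (\<forall>x. D x \<noteq> 0 \<longrightarrow> E (f x) = k x / D x ^ m)"
  using ratf_comp_poly[OF assms] unfolding ratf_def by blast

lemma rational_map_ratm: "rational_map CX CY f q \<Longrightarrow> ratm CX CY q f"
  unfolding rational_map_def ratm_def ratf_def by (metis power_one_right)

lemma ratm_rational_map:
  assumes "finite CY" "polyfun CX D" "D x0 \<noteq> 0" "ratm CX CY D f"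
  shows "\<exists>n. rational_map CX CY f (\<lambda>x. D x ^ n)"
proof -
  have "\<forall>c\<in>CY. \<exists>n h. polyfun CX h \<and> (\<forall>x. D x \<noteq> 0 \<longrightarrow> c (f x) = h x / D x ^ n)"
    using assms(4) unfolding ratm_def ratf_def by blast
  then obtain N H where NH: "\<forall>c\<in>CY. polyfun CX (H c) \<and> (\<forall>x. D x \<noteq> 0 \<longrightarrow> c (f x) = H c x / D x ^ N c)"
    by metis
  define n where "n = (\<Sum>c\<in>CY. N c) + 1"
  have le: "N c \<le> n" if "c \<in> CY" for c
    unfolding n_def using assms(1) that by (intro trans_le_add1 member_le_sum) auto
  show ?thesis unfolding rational_map_def
  proof (rule exI[of _ n], intro conjI ballI)
    show "polyfun CX (\<lambda>x. D x ^ n)" by (rule polyfun_pow[OF assms(2)])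
    show "\<exists>x. D x ^ n \<noteq> 0" using assms(3) by auto
    fix c assume c: "c \<in> CY"
    show "\<exists>p. polyfun CX p \<and> (\<forall>x. D x ^ n \<noteq> 0 \<longrightarrow> c (f x) = p x / D x ^ n)"
    proof (intro exI conjI allI impI)
      show "polyfun CX (\<lambda>x. H c x * D x ^ (n - N c))"
        using NH c assms(2) by (auto intro: polyfun.mult polyfun_pow)
      fix x assume "D x ^ n \<noteq> 0"
      hence "D x \<noteq> 0" unfolding n_def by auto
      have "D x ^ n = D x ^ (n - N c) * D x ^ N c" using le[OF c]
        by (metis le_add_diff_inverse2 power_add)
      thus "c (f x) = H c x * D x ^ (n - N c) / D x ^ n"
        using NH c \<open>D x \<noteq> 0\<close> by simp
    qed
  qed
qed

lemma ratm_id: "ratm C C (\<lambda>x. 1) (\<lambda>x. x)"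
  unfolding ratm_def by (auto intro: ratf_poly polyfun.coord)




lemma rat_eq_via:
  assumes "lines CX" "polyfun CY D" "ratf CY D f" "ratf CY D g" "ratm CX CY (\<lambda>x. 1) \<phi>"
    "\<And>y. \<exists>x. \<phi> x = y"
    "generically CX (\<lambda>x. D (\<phi> x) \<noteq> 0 \<and> f (\<phi> x) = g (\<phi> x))"
    "D y \<noteq> 0"
  shows "f y = g y"
proof -
  obtain n1 h1 where 1: "polyfun CY h1" "\<forall>x. D x \<noteq> 0 \<longrightarrow> f x = h1 x / D x ^ n1"
    using assms(3) unfolding ratf_def by blast
  obtain n2 h2 where 2: "polyfun CY h2" "\<forall>x. D x \<noteq> 0 \<longrightarrow> g x = h2 x / D x ^ n2"
    using assms(4) unfolding ratf_def by blast
  define h where "h = (\<lambda>y. h1 y * D y ^ n2 - h2 y * D y ^ n1)"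
  have ph: "polyfun CY h" unfolding h_def using 1 2 assms(2)
    by (intro polyfun_diff polyfun.mult polyfun_pow)
  have ph2: "polyfun CX (\<lambda>x. h (\<phi> x))" by (rule polyfun_comp[OF assms(5) ph])
  have "generically CX (\<lambda>x. h (\<phi> x) = 0)"
  proof (rule gen_mono[OF assms(7)])
    fix x assume a: "D (\<phi> x) \<noteq> 0 \<and> f (\<phi> x) = g (\<phi> x)"
    have e: "h1 (\<phi> x) / D (\<phi> x) ^ n1 = h2 (\<phi> x) / D (\<phi> x) ^ n2" using 1 2 a by metis
    thus "h (\<phi> x) = 0" using a unfolding h_def by (simp add: frac_eq_eq)
  qed
  hence z: "h (\<phi> x) = 0" for x by (rule vanish[OF assms(1) ph2])
  obtain x where "\<phi> x = y" using assms(6) by blast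
  hence "h y = 0" using z by blast
  thus ?thesis using 1 2 assms(8) unfolding h_def by (simp add: frac_eq_eq)
qed

lemma rat_eq:
  assumes "lines C" "polyfun C D" "ratf C D f" "ratf C D g"
    "generically C (\<lambda>x. D x \<noteq> 0 \<and> f x = g x)" "D y \<noteq> 0"
  shows "f y = g y"
  using rat_eq_via[OF assms(1-4) ratm_id] assms(5,6) by blast

definition domr :: "('a \<Rightarrow> complex) set \<Rightarrow> ('b \<Rightarrow> complex) set \<Rightarrow> ('a \<Rightarrow> complex) \<Rightarrow> ('a \<Rightarrow> 'b) \<Rightarrow> bool" where
  "domr CX CY D f \<longleftrightarrow> polyfun CX D \<and> ratm CX CY D f \<and>
     (\<forall>r. polyfun CY r \<longrightarrow> (\<exists>y. r y \<noteq> 0) \<longrightarrow> (\<exists>x. D x \<noteq> 0 \<and> r (f x) \<noteq> 0))"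

lemma pullback:
  assumes "domr CX CY D f" "generically CY P"
  shows "generically CX (\<lambda>x. D x \<noteq> 0 \<and> P (f x))"
proof -
  obtain r y where r: "polyfun CY r" "r y \<noteq> 0" "\<forall>y. r y \<noteq> 0 \<longrightarrow> P y"
    using assms(2) unfolding generically_def by blast
  have D: "polyfun CX D" "ratm CX CY D f" using assms(1) unfolding domr_def by auto
  obtain n h where h: "polyfun CX h" "\<forall>x. D x \<noteq> 0 \<longrightarrow> r (f x) = h x / D x ^ n"
    using ratf_comp_poly[OF D r(1)] unfolding ratf_def by blast
  obtain x where x: "D x \<noteq> 0" "r (f x) \<noteq> 0" using assms(1) r unfolding domr_def by blast
  show ?thesis unfolding generically_def
  proof (rule exI[of _ "\<lambda>x. D x * h x"], intro conjI)
    show "polyfun CX (\<lambda>x. D x * h x)" using D h by (intro polyfun.mult)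
    show "\<exists>x. D x * h x \<noteq> 0" using x h by (intro exI[of _ x]) auto
    show "\<forall>z. D z * h z \<noteq> 0 \<longrightarrow> D z \<noteq> 0 \<and> P (f z)" using h r by auto
  qed
qed

lemma dom_rinv:
  assumes "lines CY" "polyfun CX D" "ratm CX CY D f"
    "generically CY (\<lambda>y. D (g y) \<noteq> 0 \<and> f (g y) = y)"
  shows "domr CX CY D f"
  unfolding domr_def
proof (intro conjI allI impI assms(2,3))
  fix r assume r: "polyfun CY r" "\<exists>y. r y \<noteq> 0"
  obtain y0 where "r y0 \<noteq> 0" using r by blast
  have "generically CY (\<lambda>y. r y \<noteq> 0)" by (rule gen_poly[OF r(1) \<open>r y0 \<noteq> 0\<close>])
  hence "generically CY (\<lambda>y. r y \<noteq> 0 \<and> (D (g y) \<noteq> 0 \<and> f (g y) = y))"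
    by (intro gen_conj[OF assms(1) _ assms(4)])
  then obtain y where "r y \<noteq> 0" "D (g y) \<noteq> 0" "f (g y) = y" using gen_ex by blast
  thus "\<exists>x. D x \<noteq> 0 \<and> r (f x) \<noteq> 0" by metis
qed

lemma dom_surj:
  assumes "ratm CX CY (\<lambda>x. 1) f" "\<And>y. f (g y) = y"
  shows "domr CX CY (\<lambda>x. 1) f"
  unfolding domr_def using assms by (metis polyfun.const zero_neq_one)




type_synonym mat2 = "complex^2^2"
type_synonym vec2 = "complex^2"

definition mk :: "complex \<Rightarrow> complex \<Rightarrow> complex \<Rightarrow> complex \<Rightarrow> mat2" where
  "mk a b c d = vector [vector [a, b], vector [c, d]]"

lemma mk_nth [simp]: "mk a b c d $ 1 $ 1 = a" "mk a b c d $ 1 $ 2 = b"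
  "mk a b c d $ 2 $ 1 = c" "mk a b c d $ 2 $ 2 = d"
  by (simp_all add: mk_def)

lemma mat_eq2: "(M :: mat2) = N \<longleftrightarrow> M$1$1 = N$1$1 \<and> M$1$2 = N$1$2 \<and> M$2$1 = N$2$1 \<and> M$2$2 = N$2$2"
  by (auto simp: vec_eq_iff forall_2)

lemma vec_eq2: "(u :: vec2) = v \<longleftrightarrow> u$1 = v$1 \<and> u$2 = v$2"
  by (auto simp: vec_eq_iff forall_2)

lemma mk_eta: "(M :: mat2) = mk (M$1$1) (M$1$2) (M$2$1) (M$2$2)"
  by (simp add: mat_eq2)

lemma mult_nth [simp]: "((A :: mat2) ** B) $ i $ j = A$i$1 * B$1$j + A$i$2 * B$2$j"
  by (simp add: matrix_matrix_mult_def sum_2)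

lemma mat1_nth [simp]: "(mat 1 :: mat2) $ 1 $ 1 = 1" "(mat 1 :: mat2) $ 1 $ 2 = 0"
  "(mat 1 :: mat2) $ 2 $ 1 = 0" "(mat 1 :: mat2) $ 2 $ 2 = 1"
  by (simp_all add: mat_def)

lemma det2: "det (M :: mat2) = M$1$1 * M$2$2 - M$1$2 * M$2$1"
  by (rule det_2)

lemma trace2: "trace (M :: mat2) = M$1$1 + M$2$2"
  by (simp add: trace_def sum_2)

lemma Inv_nth [simp]: "Inv M $ 1 = M$1$1 + M$2$2" "Inv M $ 2 = M$1$1 * M$2$2 - M$1$2 * M$2$1"
  by (simp_all add: Inv_def trace2 det2)

definition inv2 :: "mat2 \<Rightarrow> mat2" where
  "inv2 M = mk (M$2$2 / det M) (- M$1$2 / det M) (- M$2$1 / det M) (M$1$1 / det M)"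

lemma inv2_props:
  assumes "det M \<noteq> 0"
  shows "M ** inv2 M = mat 1" "inv2 M ** M = mat 1"
proof -
  define d where "d = det M"
  have dd: "M$1$1 * M$2$2 - M$1$2 * M$2$1 = d" "d \<noteq> 0" unfolding d_def using assms by (simp_all add: det2)
  show "M ** inv2 M = mat 1" "inv2 M ** M = mat 1"
    unfolding mat_eq2 inv2_def d_def[symmetric] mult_nth mk_nth mat1_nth using dd
    by (simp_all add: field_simps)
qed

lemma matrix_inv_unique:
  fixes M :: mat2
  assumes "M ** Y = mat 1" "Y ** M = mat 1"
  shows "matrix_inv M = Y"
proof -
  have u: "\<And>Z. M ** Z = mat 1 \<and> Z ** M = mat 1 \<Longrightarrow> Z = Y"
  proof -
    fix Z assume Z: "M ** Z = mat 1 \<and> Z ** M = mat 1"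
    have "Z = Z ** (M ** Y)" using assms by (simp only: matrix_mul_rid)
    also have "\<dots> = (Z ** M) ** Y" by (rule matrix_mul_assoc)
    also have "\<dots> = Y" using Z by (simp only: matrix_mul_lid)
    finally show "Z = Y" .
  qed
  show ?thesis unfolding matrix_inv_def
    by (rule some_equality) (use assms u in blast)+
qed

lemma matrix_inv2:
  assumes "det (M::mat2) \<noteq> 0"
  shows "invertible M" "matrix_inv M = inv2 M"
  using inv2_props[OF assms] matrix_inv_unique unfolding invertible_def by auto

lemma inv_props:
  assumes "invertible (M :: mat2)"
  shows "M ** matrix_inv M = mat 1" "matrix_inv M ** M = mat 1"
proof -
  obtain Y where "M ** Y = mat 1" "Y ** M = mat 1" using assms unfolding invertible_def by blast
  hence "matrix_inv M = Y" by (rule matrix_inv_unique)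
  thus "M ** matrix_inv M = mat 1" "matrix_inv M ** M = mat 1" using \<open>M ** Y = mat 1\<close> \<open>Y ** M = mat 1\<close> by auto
qed

lemma invertible_det: "invertible (M :: mat2) \<longleftrightarrow> det M \<noteq> 0"
  using invertible_det_nz by blast

definition lin :: "complex \<Rightarrow> complex \<Rightarrow> mat2 \<Rightarrow> mat2" where
  "lin a b M = mk (a + b * M$1$1) (b * M$1$2) (b * M$2$1) (a + b * M$2$2)"

definition FF :: "complex \<Rightarrow> complex \<Rightarrow> vec2 \<Rightarrow> vec2" where
  "FF a b y = vector [2*a + b * y$1, a^2 + a * b * y$1 + b^2 * y$2]"

definition compn :: "vec2 \<Rightarrow> mat2" where
  "compn y = mk 0 (- (y$2)) 1 (y$1)"

definition kry :: "mat2 \<Rightarrow> mat2" where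
  "kry M = mk 1 (M$1$1) 0 (M$2$1)"

lemma FF_nth [simp]: "FF a b y $ 1 = 2*a + b * y$1" "FF a b y $ 2 = a^2 + a * b * y$1 + b^2 * y$2"
  by (simp_all add: FF_def)

lemma L1: "Inv (lin a b M) = FF a b (Inv M)"
  by (simp add: vec_eq2 lin_def power2_eq_square algebra_simps)

lemma L2a: "b \<noteq> 0 \<Longrightarrow> lin (-a/b) (1/b) (lin a b M) = M"
  by (simp add: mat_eq2 lin_def field_simps)

lemma L2b: "b \<noteq> 0 \<Longrightarrow> lin a b (lin (-a/b) (1/b) N) = N"
  by (simp add: mat_eq2 lin_def field_simps)

lemma L3:
  assumes "b \<noteq> 0" "FF a b y = Inv N"
  shows "Inv (lin (-a/b) (1/b) N) = y"
proof -
  have e1: "N$1$1 + N$2$2 = 2*a + b * y$1" and e2: "N$1$1 * N$2$2 - N$1$2 * N$2$1 = a^2 + a * b * y$1 + b^2 * y$2"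
    using assms(2) by (auto simp: vec_eq2)
  have "(-a/b + 1/b * N$1$1) + (-a/b + 1/b * N$2$2) = (N$1$1 + N$2$2 - 2*a)/b"
    using assms(1) by (simp add: field_simps)
  also have "\<dots> = y$1" unfolding e1 using assms(1) by simp
  finally have c1: "(-a/b + 1/b * N$1$1) + (-a/b + 1/b * N$2$2) = y$1" .
  have "(-a/b + 1/b * N$1$1) * (-a/b + 1/b * N$2$2) - (1/b * N$1$2) * (1/b * N$2$1)
      = ((N$1$1 * N$2$2 - N$1$2 * N$2$1) - a * (N$1$1 + N$2$2) + a^2) / b^2"
    using assms(1) by (simp add: field_simps power2_eq_square)
  also have "\<dots> = y$2" unfolding e1 e2 using assms(1) by (simp add: field_simps power2_eq_square)
  finally have c2: "(-a/b + 1/b * N$1$1) * (-a/b + 1/b * N$2$2) - (1/b * N$1$2) * (1/b * N$2$1) = y$2" .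
  show ?thesis unfolding vec_eq2 lin_def Inv_nth mk_nth using c1 c2 by simp
qed

lemma L4:
  assumes "G$2$1 \<noteq> 0" "G ** P = P ** (G :: mat2)"
  shows "P = lin (P$1$1 - (P$2$1 / G$2$1) * G$1$1) (P$2$1 / G$2$1) G"
proof -
  have e: "G$1$1 * P$1$1 + G$1$2 * P$2$1 = P$1$1 * G$1$1 + P$1$2 * G$2$1"
          "G$2$1 * P$1$1 + G$2$2 * P$2$1 = P$2$1 * G$1$1 + P$2$2 * G$2$1"
    using assms(2) unfolding mat_eq2 by auto
  have g: "G$2$1 \<noteq> 0" by fact
  show ?thesis unfolding mat_eq2 lin_def mk_nth
  proof (intro conjI)
    show "P$1$2 = P$2$1 / G$2$1 * G$1$2" using g e(1) by (simp add: field_simps)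
    show "P$2$1 = P$2$1 / G$2$1 * G$2$1" using g by simp
    show "P$2$2 = P$1$1 - P$2$1 / G$2$1 * G$1$1 + P$2$1 / G$2$1 * G$2$2"
      using g e(2) by (simp add: field_simps)
  qed simp
qed

lemma L5:
  assumes "M$2$1 \<noteq> 0"
  shows "det (kry M) \<noteq> 0" "M ** kry M = kry M ** compn (Inv M)"
  using assms unfolding det2 kry_def compn_def mat_eq2 mult_nth mk_nth Inv_nth
  by (simp_all add: algebra_simps)

lemma conj_lin:
  assumes "X ** Y = mat 1"
  shows "X ** lin a b G ** Y = lin a b (X ** G ** Y)"
proof -
  have e: "X$1$1 * Y$1$1 + X$1$2 * Y$2$1 = 1" "X$1$1 * Y$1$2 + X$1$2 * Y$2$2 = 0"
     "X$2$1 * Y$1$1 + X$2$2 * Y$2$1 = 0" "X$2$1 * Y$1$2 + X$2$2 * Y$2$2 = 1"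
    using assms unfolding mat_eq2 by auto
  show ?thesis unfolding mat_eq2 lin_def mult_nth mk_nth
    using e by algebra
qed




lemma mat_coords_iff: "c \<in> mat_coords \<longleftrightarrow> (\<exists>i j. c = (\<lambda>M. M$i$j))"
  unfolding mat_coords_def by blast

lemma vec_coords_iff: "c \<in> vec_coords \<longleftrightarrow> (\<exists>i. c = (\<lambda>v. v$i))"
  unfolding vec_coords_def by blast

lemma polyfun_entry [intro]: "polyfun mat_coords (\<lambda>M. M$i$j)"
  by (rule polyfun.coord) (auto simp: mat_coords_iff)

lemma polyfun_ventry [intro]: "polyfun vec_coords (\<lambda>v. v$i)"
  by (rule polyfun.coord) (auto simp: vec_coords_iff)

lemma finite_mat_coords: "finite mat_coords"
proof -
  have e: "mat_coords = (\<lambda>(i,j). (\<lambda>M::mat2. M$i$j)) ` (UNIV :: (2 \<times> 2) set)" unfolding mat_coords_def by auto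
  have "finite ((\<lambda>(i,j). (\<lambda>M::mat2. M$i$j)) ` (UNIV :: (2 \<times> 2) set))" by (rule finite_imageI) simp
  thus ?thesis unfolding e .
qed

lemma finite_vec_coords: "finite vec_coords"
proof -
  have e: "vec_coords = (\<lambda>i. (\<lambda>v::vec2. v$i)) ` (UNIV :: 2 set)" unfolding vec_coords_def by auto
  have "finite ((\<lambda>i. (\<lambda>v::vec2. v$i)) ` (UNIV :: 2 set))" by (rule finite_imageI) simp
  thus ?thesis unfolding e .
qed

lemma lines_mat: "lines mat_coords"
  unfolding lines_def
proof (intro allI)
  fix x y :: mat2
  let ?L = "\<lambda>t. (\<chi> i j. x$i$j + t * (y$i$j - x$i$j)) :: mat2"
  show "\<exists>L. L 0 = x \<and> L 1 = y \<and> (\<forall>c\<in>mat_coords. \<exists>a b. \<forall>t. c (L t) = a + b * t)"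
  proof (rule exI[of _ ?L], intro conjI ballI)
    fix c :: "mat2 \<Rightarrow> complex" assume "c \<in> mat_coords"
    then obtain i j where c: "c = (\<lambda>M. M$i$j)" unfolding mat_coords_iff by blast
    show "\<exists>a b. \<forall>t. c (?L t) = a + b * t" unfolding c
      by (intro exI[of _ "x$i$j"] exI[of _ "y$i$j - x$i$j"]) (simp add: mult.commute)
  qed (simp_all add: vec_eq_iff)
qed

lemma lines_vec: "lines vec_coords"
  unfolding lines_def
proof (intro allI)
  fix x y :: vec2
  let ?L = "\<lambda>t. (\<chi> i. x$i + t * (y$i - x$i)) :: vec2"
  show "\<exists>L. L 0 = x \<and> L 1 = y \<and> (\<forall>c\<in>vec_coords. \<exists>a b. \<forall>t. c (L t) = a + b * t)"
  proof (rule exI[of _ ?L], intro conjI ballI)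
    fix c :: "vec2 \<Rightarrow> complex" assume "c \<in> vec_coords"
    then obtain i where c: "c = (\<lambda>v. v$i)" unfolding vec_coords_iff by blast
    show "\<exists>a b. \<forall>t. c (?L t) = a + b * t" unfolding c
      by (intro exI[of _ "x$i"] exI[of _ "y$i - x$i"]) (simp add: mult.commute)
  qed (simp_all add: vec_eq_iff)
qed

lemma ratm_matI:
  assumes "\<And>i j. ratf CX D (\<lambda>x. f x $ i $ j)"
  shows "ratm CX mat_coords D f"
  unfolding ratm_def
proof
  fix c assume "c \<in> mat_coords"
  then obtain i j where c: "c = (\<lambda>M. M$i$j)" unfolding mat_coords_iff by blast
  show "ratf CX D (\<lambda>x. c (f x))" unfolding c by (rule assms)
qed

lemma ratm_matI2:
  assumes "ratf CX D (\<lambda>x. f x $ 1 $ 1)" "ratf CX D (\<lambda>x. f x $ 1 $ 2)"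
    "ratf CX D (\<lambda>x. f x $ 2 $ 1)" "ratf CX D (\<lambda>x. f x $ 2 $ 2)"
  shows "ratm CX mat_coords D f"
proof (rule ratm_matI)
  fix i j :: 2
  show "ratf CX D (\<lambda>x. f x $ i $ j)"
    using exhaust_2[of i] exhaust_2[of j] assms by (elim disjE) simp_all
qed

lemma ratm_vecI2:
  assumes "ratf CX D (\<lambda>x. f x $ 1)" "ratf CX D (\<lambda>x. f x $ 2)"
  shows "ratm CX vec_coords D f"
  unfolding ratm_def
proof
  fix c assume "c \<in> vec_coords"
  then obtain i where c: "c = (\<lambda>v. v$i)" unfolding vec_coords_iff by blast
  show "ratf CX D (\<lambda>x. c (f x))" unfolding c using exhaust_2[of i] assms by (elim disjE) simp_all
qed

lemma ratm_matD: "ratm CX mat_coords D f \<Longrightarrow> ratf CX D (\<lambda>x. f x $ i $ j)"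
  unfolding ratm_def using mat_coords_iff[of "\<lambda>M. M$i$j"] by auto

lemma ratm_vecD: "ratm CX vec_coords D f \<Longrightarrow> ratf CX D (\<lambda>x. f x $ i)"
  unfolding ratm_def using vec_coords_iff[of "\<lambda>v. v$i"] by auto

lemma ratm_Inv: "ratm mat_coords vec_coords (\<lambda>x. 1) Inv"
proof (rule ratm_vecI2)
  show "ratf mat_coords (\<lambda>x. 1) (\<lambda>x. Inv x $ 1)" unfolding Inv_nth
    by (rule ratf_poly, rule polyfun.add; rule polyfun_entry)
  show "ratf mat_coords (\<lambda>x. 1) (\<lambda>x. Inv x $ 2)" unfolding Inv_nth
    by (rule ratf_poly, rule polyfun_diff; rule polyfun.mult; rule polyfun_entry)
qed

lemma ratm_conj: "ratm mat_coords mat_coords (\<lambda>x. 1) (\<lambda>M. A ** M ** B)"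
proof (rule ratm_matI)
  fix i j
  show "ratf mat_coords (\<lambda>x. 1) (\<lambda>x. (A ** x ** B) $ i $ j)" unfolding mult_nth
    by (rule ratf_poly, rule polyfun.add; rule polyfun.mult; (rule polyfun.const)?;
       rule polyfun.add; rule polyfun.mult; (rule polyfun.const | rule polyfun_entry))
qed

lemma ratm_conj_rat:
  assumes "polyfun CX D" "ratm CX mat_coords D f"
  shows "ratm CX mat_coords D (\<lambda>x. A ** f x ** B)"
proof (rule ratm_matI)
  fix i j
  have "polyfun mat_coords (\<lambda>M. (A ** M ** B) $ i $ j)"
    by (rule ratf_polyfun, rule ratm_matD[OF ratm_conj])
  thus "ratf CX D (\<lambda>x. (A ** f x ** B) $ i $ j)"
    by (rule ratf_comp_poly[OF assms])
qed

lemma ratm_compmap: "ratm vec_coords mat_coords (\<lambda>x. 1) compn"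
  by (rule ratm_matI2; unfold compn_def mk_nth; rule ratf_poly;
      (rule polyfun.const | rule polyfun_ventry | rule polyfun_minus, rule polyfun_ventry))

lemma ratm_Gam: "ratm vec_coords mat_coords (\<lambda>x. 1) (\<lambda>y. A ** compn y ** B)"
  by (rule ratm_conj_rat[OF polyfun.const ratm_compmap])

lemma ratm_comp:
  assumes "polyfun CX D" "ratm CX CY D f" "ratm CY CZ E g" "polyfun CX k"
    "\<forall>x. D x \<noteq> 0 \<longrightarrow> E (f x) = k x / D x ^ m"
  shows "ratm CX CZ (\<lambda>x. D x * k x) (\<lambda>x. g (f x))"
  unfolding ratm_def
proof
  fix c assume "c \<in> CZ"
  hence "ratf CY E (\<lambda>y. c (g y))" using assms(3) unfolding ratm_def by blast
  thus "ratf CX (\<lambda>x. D x * k x) (\<lambda>x. c (g (f x)))" by (rule ratf_comp[OF assms(1,2) _ assms(4,5)])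
qed

lemma Inv_comp [simp]: "Inv (compn y) = y"
  by (simp add: vec_eq2 compn_def)

lemma Inv_conj:
  assumes "invertible A"
  shows "Inv (A ** M ** matrix_inv A) = Inv M"
proof -
  have "det (A ** M ** matrix_inv A) = det M * det (A ** matrix_inv A)"
    by (simp only: det_mul mult.commute mult.left_commute)
  hence d: "det (A ** M ** matrix_inv A) = det M" using inv_props[OF assms] by (simp add: det_I)
  have "trace (A ** M ** matrix_inv A) = trace (matrix_inv A ** (A ** M))"
    by (rule trace_mul_sym)
  also have "\<dots> = trace M" using inv_props[OF assms] by (simp only: matrix_mul_assoc matrix_mul_lid)
  finally have t: "trace (A ** M ** matrix_inv A) = trace M" .
  show ?thesis unfolding Inv_def t d ..
qed

lemma dom_Inv: "domr mat_coords vec_coords (\<lambda>x. 1) Inv"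
  by (rule dom_surj[OF ratm_Inv, of compn]) simp

lemma coords_eq_mat:
  assumes "\<And>c. c \<in> mat_coords \<Longrightarrow> c M = c N" shows "(M :: mat2) = N"
proof -
  have "M$i$j = N$i$j" for i j using assms[of "\<lambda>M. M$i$j"] mat_coords_iff by blast
  thus ?thesis by (simp add: vec_eq_iff)
qed

lemma coords_eq_vec:
  assumes "\<And>c. c \<in> vec_coords \<Longrightarrow> c u = c v" shows "(u :: vec2) = v"
proof -
  have "u$i = v$i" for i using assms[of "\<lambda>v. v$i"] vec_coords_iff by blast
  thus ?thesis by (simp add: vec_eq_iff)
qed




lemma cancel_r: "A ** B = mat 1 \<Longrightarrow> (X :: mat2) ** A ** B = X"
  by (metis matrix_mul_assoc matrix_mul_rid)

lemma cancel_l: "A ** B = mat 1 \<Longrightarrow> A ** (B ** (X :: mat2)) = X"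
  by (metis matrix_mul_assoc matrix_mul_lid)

lemma L5':
  assumes "M$2$1 \<noteq> 0"
  shows "M = kry M ** compn (Inv M) ** matrix_inv (kry M)"
proof -
  have i: "invertible (kry M)" using L5(1)[OF assms] invertible_det by blast
  have "M = M ** kry M ** matrix_inv (kry M)" using cancel_r[OF inv_props(1)[OF i]] by simp
  also have "\<dots> = kry M ** compn (Inv M) ** matrix_inv (kry M)" using L5(2)[OF assms] by simp
  finally show ?thesis .
qed

lemma kry_conj:
  assumes "M$2$1 \<noteq> 0" "G$2$1 \<noteq> 0" "Inv G = Inv M"
  shows "\<exists>X. invertible X \<and> X ** G ** matrix_inv X = M"
proof -
  define KM where "KM = kry M"
  define KG where "KG = kry G"
  have iM: "invertible KM" unfolding KM_def using L5(1)[OF assms(1)] invertible_det by blast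
  have iG: "invertible KG" unfolding KG_def using L5(1)[OF assms(2)] invertible_det by blast
  define X where "X = KM ** matrix_inv KG"
  define Y where "Y = KG ** matrix_inv KM"
  have XY: "X ** Y = mat 1" unfolding X_def Y_def
    by (metis cancel_l inv_props(1) inv_props(2) iG iM matrix_mul_assoc)
  have YX: "Y ** X = mat 1" unfolding X_def Y_def
    by (metis cancel_l inv_props(1) inv_props(2) iG iM matrix_mul_assoc)
  have iX: "invertible X" using XY YX unfolding invertible_def by blast
  have mX: "matrix_inv X = Y" by (rule matrix_inv_unique[OF XY YX])
  have G: "G = KG ** compn (Inv M) ** matrix_inv KG" using L5'[OF assms(2)] assms(3) unfolding KG_def by simp
  have M: "M = KM ** compn (Inv M) ** matrix_inv KM" using L5'[OF assms(1)] unfolding KM_def by simp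
  have "X ** G ** matrix_inv X = X ** G ** Y" by (simp only: mX)
  also have "\<dots> = KM ** (matrix_inv KG ** KG) ** compn (Inv M) ** (matrix_inv KG ** KG) ** matrix_inv KM"
    unfolding X_def Y_def G by (simp add: matrix_mul_assoc)
  also have "\<dots> = KM ** compn (Inv M) ** matrix_inv KM" using inv_props(2)[OF iG] by (simp only: matrix_mul_rid)
  also have "\<dots> = M" using M by simp
  finally show ?thesis using iX by blast
qed

lemma shift_ex: "\<exists>c. det ((G :: mat2) + mk c 0 0 c) \<noteq> 0"
proof (rule ccontr)
  assume "\<not> ?thesis"
  hence h: "det (G + mk c 0 0 c) = 0" for c by blast
  have e: "det (G + mk c 0 0 c) = c^2 + c * (G$1$1 + G$2$2) + det G" for c
    by (simp add: det2 power2_eq_square algebra_simps)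
  define t where "t = G$1$1 + G$2$2"
  have e': "det (G + mk c 0 0 c) = c^2 + c * t + det G" for c unfolding t_def by (rule e)
  have "det G = 0" using h[of 0] e'[of 0] by simp
  moreover have "1 + t + det G = 0" using h[of 1] e'[of 1] by simp
  moreover have "4 + 2 * t + det G = 0" using h[of 2] e'[of 2] by (simp add: power2_eq_square)
  ultimately show False by algebra
qed

lemma shift_comm: "(G + mk c 0 0 c) ** G = G ** (G + mk c 0 0 (c :: complex))"
  unfolding mat_eq2 mult_nth vector_add_component mk_nth by (intro conjI; algebra)

lemma shift_comm2:
  assumes "(G + mk c 0 0 c) ** P = P ** (G + mk c 0 0 (c :: complex))"
  shows "G ** P = P ** G"
  using assms unfolding mat_eq2 mult_nth vector_add_component mk_nth
  by (elim conjE, intro conjI; algebra)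

lemma compat_upg:
  assumes "ratm mat_coords mat_coords q \<Phi>" "polyfun mat_coords q" "q M0 \<noteq> 0"
    "compatible_with_conjugation \<Phi>" "invertible A" "q M \<noteq> 0" "q (A ** M ** matrix_inv A) \<noteq> 0"
  shows "A ** \<Phi> M ** matrix_inv A = \<Phi> (A ** M ** matrix_inv A)"
proof -
  define Ai where "Ai = matrix_inv A"
  define k where "k = (\<lambda>M. q (A ** M ** Ai))"
  have pk: "polyfun mat_coords k" unfolding k_def by (rule polyfun_comp[OF ratm_conj assms(2)])
  define D where "D = (\<lambda>M. q M * k M)"
  have pD: "polyfun mat_coords D" unfolding D_def using assms(2) pk by (rule polyfun.mult)
  have r1: "ratm mat_coords mat_coords D (\<lambda>M. A ** \<Phi> M ** Ai)"
    unfolding D_def by (rule ratm_matI, rule ratf_mono[OF pk], rule ratm_matD, rule ratm_conj_rat[OF assms(2,1)])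
  have "ratm mat_coords mat_coords (\<lambda>x. 1 * k x) (\<lambda>M. \<Phi> (A ** M ** Ai))"
    by (rule ratm_comp[OF polyfun.const ratm_conj assms(1) pk, where m=0]) (simp add: k_def)
  hence r2: "ratm mat_coords mat_coords D (\<lambda>M. \<Phi> (A ** M ** Ai))"
    unfolding ratm_def D_def
    by (auto intro: ratf_cong[OF _ ratf_mono2[OF assms(2)]])
  have inv: "A ** Ai = mat 1" "Ai ** A = mat 1" unfolding Ai_def using inv_props[OF assms(5)] by auto
  have "k (Ai ** M0 ** A) = q M0" unfolding k_def using inv
    by (metis cancel_l cancel_r matrix_mul_assoc)
  hence "k (Ai ** M0 ** A) \<noteq> 0" using assms(3) by simp
  then obtain Z where "q Z \<noteq> 0" "k Z \<noteq> 0" using T1[OF lines_mat assms(2) pk assms(3)] by blast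
  hence "D Z \<noteq> 0" unfolding D_def by simp
  have gen: "generically mat_coords (\<lambda>M. D M \<noteq> 0 \<and> A ** \<Phi> M ** Ai = \<Phi> (A ** M ** Ai))"
    using assms(4,5) unfolding compatible_with_conjugation_def Ai_def
    by (intro gen_conj[OF lines_mat gen_poly[OF pD \<open>D Z \<noteq> 0\<close>]]) blast
  have DM: "D M \<noteq> 0" unfolding D_def k_def Ai_def using assms(6,7) by simp
  show ?thesis unfolding Ai_def[symmetric]
  proof (rule coords_eq_mat)
    fix c assume c: "c \<in> mat_coords"
    show "c (A ** \<Phi> M ** Ai) = c (\<Phi> (A ** M ** Ai))"
    proof (rule rat_eq[OF lines_mat pD _ _ _ DM])
      show "ratf mat_coords D (\<lambda>M. c (A ** \<Phi> M ** Ai))" using r1 c unfolding ratm_def by blast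
      show "ratf mat_coords D (\<lambda>M. c (\<Phi> (A ** M ** Ai)))" using r2 c unfolding ratm_def by blast
      show "generically mat_coords (\<lambda>M. D M \<noteq> 0 \<and> c (A ** \<Phi> M ** Ai) = c (\<Phi> (A ** M ** Ai)))"
        by (rule gen_mono[OF gen]) simp
    qed
  qed
qed




lemma struct_thm:
  assumes rq: "ratm mat_coords mat_coords q \<Phi>" and pq: "polyfun mat_coords q" and q0: "q M0 \<noteq> 0"
    and cc: "compatible_with_conjugation \<Phi>"
  shows "\<exists>a b E. polyfun vec_coords E \<and> (\<exists>y. E y \<noteq> 0) \<and> ratf vec_coords E a \<and> ratf vec_coords E b \<and>
     (\<forall>M. q M \<noteq> 0 \<and> M$2$1 \<noteq> 0 \<and> E (Inv M) \<noteq> 0 \<longrightarrow> \<Phi> M = lin (a (Inv M)) (b (Inv M)) M)"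
proof -
  note upg = compat_upg[OF rq pq q0 cc]
  have "(mk 0 0 1 0) $ 2 $ 1 \<noteq> 0" by simp
  then obtain M1 where M1: "q M1 \<noteq> 0" "M1 $ 2 $ 1 \<noteq> 0"
    using T1[OF lines_mat pq polyfun_entry q0] by blast
  define A0 where "A0 = kry M1"
  define B0 where "B0 = matrix_inv A0"
  have iA0: "invertible A0" unfolding A0_def using L5(1)[OF M1(2)] invertible_det by blast
  define \<Gamma> where "\<Gamma> = (\<lambda>y. A0 ** compn y ** B0)"
  have rG: "ratm vec_coords mat_coords (\<lambda>x. 1) \<Gamma>" unfolding \<Gamma>_def by (rule ratm_Gam)
  have G1: "\<Gamma> (Inv M1) = M1" unfolding \<Gamma>_def A0_def B0_def using L5'[OF M1(2)] by simp
  have IG: "Inv (\<Gamma> y) = y" for y unfolding \<Gamma>_def B0_def using Inv_conj[OF iA0] by simp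
  define QG where "QG = (\<lambda>y. q (\<Gamma> y))"
  define G21 where "G21 = (\<lambda>y. \<Gamma> y $ 2 $ 1)"
  define G11 where "G11 = (\<lambda>y. \<Gamma> y $ 1 $ 1)"
  have pQG: "polyfun vec_coords QG" unfolding QG_def by (rule polyfun_comp[OF rG pq])
  have pG21: "polyfun vec_coords G21" unfolding G21_def by (rule polyfun_comp[OF rG polyfun_entry])
  have pG11: "polyfun vec_coords G11" unfolding G11_def by (rule polyfun_comp[OF rG polyfun_entry])
  define E where "E = (\<lambda>y. QG y * G21 y)"
  have pE: "polyfun vec_coords E" unfolding E_def using pQG pG21 by (rule polyfun.mult)
  have E0: "E (Inv M1) \<noteq> 0" unfolding E_def QG_def G21_def G1 using M1 by simp
  define b where "b = (\<lambda>y. \<Phi> (\<Gamma> y) $ 2 $ 1 / G21 y)"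
  define a where "a = (\<lambda>y. \<Phi> (\<Gamma> y) $ 1 $ 1 - b y * G11 y)"
  have rPG: "ratm vec_coords mat_coords (\<lambda>y. 1 * QG y) (\<lambda>y. \<Phi> (\<Gamma> y))"
    by (rule ratm_comp[OF polyfun.const rG rq pQG, where m=0]) (simp add: QG_def)
  have pQG1: "polyfun vec_coords (\<lambda>y. 1 * QG y)" using pQG by simp
  have rb: "ratf vec_coords E b"
    unfolding b_def E_def
    by (rule ratf_cong[OF _ ratf_div_poly[OF pQG1 pG21 ratm_matD[OF rPG]]]) simp
  have ra: "ratf vec_coords E a"
    unfolding a_def
  proof (rule ratf_diff[OF pE])
    show "ratf vec_coords E (\<lambda>y. \<Phi> (\<Gamma> y) $ 1 $ 1)"
      unfolding E_def by (rule ratf_cong[OF _ ratf_mono[OF pG21 ratm_matD[OF rPG]]]) simp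
    show "ratf vec_coords E (\<lambda>y. b y * G11 y)"
      by (rule ratf_mult[OF rb ratf_poly[OF pG11]])
  qed
  have main: "\<Phi> M = lin (a (Inv M)) (b (Inv M)) M" if M: "q M \<noteq> 0" "M$2$1 \<noteq> 0" "E (Inv M) \<noteq> 0" for M
  proof -
    define y where "y = Inv M"
    define G where "G = \<Gamma> y"
    have qG: "q G \<noteq> 0" and G21: "G $ 2 $ 1 \<noteq> 0"
      using M(3) unfolding E_def QG_def G21_def G_def y_def by auto
    have IGM: "Inv G = Inv M" unfolding G_def y_def IG ..
    obtain c where c: "det (G + mk c 0 0 c) \<noteq> 0" using shift_ex by blast
    define Gc where "Gc = G + mk c 0 0 c"
    have iGc: "invertible Gc" unfolding Gc_def using c invertible_det by blast
    have cG: "Gc ** G ** matrix_inv Gc = G" unfolding Gc_def shift_comm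
      by (rule cancel_r[OF inv_props(1)[OF iGc[unfolded Gc_def]]])
    have "Gc ** \<Phi> G ** matrix_inv Gc = \<Phi> G"
      using upg[OF iGc qG] cG qG by simp
    hence "Gc ** \<Phi> G = \<Phi> G ** Gc"
      by (metis cancel_r inv_props(2) iGc)
    hence comm: "G ** \<Phi> G = \<Phi> G ** G" unfolding Gc_def by (rule shift_comm2)
    have PG: "\<Phi> G = lin (a y) (b y) G"
      using L4[OF G21 comm] unfolding a_def b_def G11_def G21_def G_def by simp
    obtain X where X: "invertible X" "X ** G ** matrix_inv X = M"
      using kry_conj[OF M(2) G21 IGM] by blast
    have "\<Phi> M = X ** \<Phi> G ** matrix_inv X"
      using upg[OF X(1) qG] X(2) M(1) by simp
    also have "\<dots> = lin (a y) (b y) (X ** G ** matrix_inv X)"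
      unfolding PG by (rule conj_lin[OF inv_props(1)[OF X(1)]])
    finally show ?thesis unfolding X(2) y_def .
  qed
  show ?thesis
    by (rule exI[of _ a], rule exI[of _ b], rule exI[of _ E]) (use pE E0 ra rb main in blast)
qed




lemma gen_pull: "domr CX CY D f \<Longrightarrow> generically CY P \<Longrightarrow> generically CX (\<lambda>x. P (f x))"
  by (rule gen_mono[OF pullback]) auto

lemma gen_ratf_nz:
  assumes "polyfun C E" "ratf C E f" "E y \<noteq> 0" "f y \<noteq> 0"
  shows "generically C (\<lambda>y. E y \<noteq> 0 \<and> f y \<noteq> 0)"
proof -
  obtain n h where h: "polyfun C h" "\<forall>x. E x \<noteq> 0 \<longrightarrow> f x = h x / E x ^ n"
    using assms(2) unfolding ratf_def by blast
  have "E y * h y \<noteq> 0" using h assms by auto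
  hence g: "generically C (\<lambda>x. E x * h x \<noteq> 0)" by (rule gen_poly[OF polyfun.mult[OF assms(1) h(1)]])
  show ?thesis by (rule gen_mono[OF g]) (use h in auto)
qed

lemma ratm_idD: "ratm C C D (\<lambda>x. x)"
  unfolding ratm_def by (auto intro: ratf_poly polyfun.coord)

lemma rat_eq_vec_via:
  assumes "lines CX" "polyfun vec_coords D" "ratm vec_coords vec_coords D f" "ratm vec_coords vec_coords D g"
    "ratm CX vec_coords (\<lambda>x. 1) \<phi>" "\<And>y. \<exists>x. \<phi> x = y"
    "generically CX (\<lambda>x. D (\<phi> x) \<noteq> 0 \<and> f (\<phi> x) = g (\<phi> x))" "D y \<noteq> 0"
  shows "f y = g y"
proof (rule coords_eq_vec)
  fix c assume c: "c \<in> vec_coords"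
  show "c (f y) = c (g y)"
  proof (rule rat_eq_via[OF assms(1,2) _ _ assms(5,6) _ assms(8)])
    show "ratf vec_coords D (\<lambda>x. c (f x))" using assms(3) c unfolding ratm_def by blast
    show "ratf vec_coords D (\<lambda>x. c (g x))" using assms(4) c unfolding ratm_def by blast
    show "generically CX (\<lambda>x. D (\<phi> x) \<noteq> 0 \<and> c (f (\<phi> x)) = c (g (\<phi> x)))"
      by (rule gen_mono[OF assms(7)]) simp
  qed
qed

lemma hyp4_upg:
  assumes rq: "ratm mat_coords mat_coords q \<Phi>" and pq: "polyfun mat_coords q" and q0: "q M0 \<noteq> 0"
    and rS: "ratm vec_coords vec_coords qS S" and pqS: "polyfun vec_coords qS" and qS0: "qS y0 \<noteq> 0"
    and h4: "generically mat_coords (\<lambda>M. q M \<noteq> 0 \<and> qS (Inv M) \<noteq> 0 \<and> Inv (\<Phi> M) = S (Inv M))"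
    and M: "q M \<noteq> 0" "qS (Inv M) \<noteq> 0"
  shows "Inv (\<Phi> M) = S (Inv M)"
proof (rule coords_eq_vec)
  define k where "k = (\<lambda>M. qS (Inv M))"
  have pk: "polyfun mat_coords k" unfolding k_def by (rule polyfun_comp[OF ratm_Inv pqS])
  define D where "D = (\<lambda>M. q M * k M)"
  have pD: "polyfun mat_coords D" unfolding D_def using pq pk by (rule polyfun.mult)
  have "k (compn y0) \<noteq> 0" unfolding k_def using qS0 by simp
  then obtain Z where "q Z \<noteq> 0" "k Z \<noteq> 0" using T1[OF lines_mat pq pk q0] by blast
  hence DZ: "D Z \<noteq> 0" unfolding D_def by simp
  have rSI: "ratm mat_coords vec_coords (\<lambda>x. 1 * k x) (\<lambda>M. S (Inv M))"
    by (rule ratm_comp[OF polyfun.const ratm_Inv rS pk, where m=0]) (simp add: k_def)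
  fix c assume c: "c \<in> vec_coords"
  show "c (Inv (\<Phi> M)) = c (S (Inv M))"
  proof (rule rat_eq[OF lines_mat pD])
    have "polyfun mat_coords (\<lambda>N. c (Inv N))" by (rule polyfun_comp[OF ratm_Inv polyfun.coord[OF c]])
    thus "ratf mat_coords D (\<lambda>M. c (Inv (\<Phi> M)))"
      unfolding D_def by (intro ratf_mono[OF pk] ratf_comp_poly[OF pq rq])
    show "ratf mat_coords D (\<lambda>M. c (S (Inv M)))"
      unfolding D_def using rSI c unfolding ratm_def
      by (auto intro: ratf_cong[OF _ ratf_mono2[OF pq]])
    show "generically mat_coords (\<lambda>x. D x \<noteq> 0 \<and> c (Inv (\<Phi> x)) = c (S (Inv x)))"
      by (rule gen_mono[OF h4]) (simp add: D_def k_def)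
    show "D M \<noteq> 0" using M unfolding D_def k_def by simp
  qed
qed




lemma gen_e21: "generically mat_coords (\<lambda>M. M$2$1 \<noteq> 0)"
  by (rule gen_poly[OF polyfun_entry, where x="mk 0 0 1 0"]) simp

lemma rational_mapD:
  assumes "rational_map CX CY f q"
  shows "ratm CX CY q f" "polyfun CX q" "\<exists>x. q x \<noteq> 0"
  using rational_map_ratm[OF assms] assms unfolding rational_map_def by auto

lemma ratm_FF:
  assumes "polyfun vec_coords E" "ratf vec_coords E c" "ratf vec_coords E e"
  shows "ratm vec_coords vec_coords E (\<lambda>y. FF (c y) (e y) y)"
proof (rule ratm_vecI2; unfold FF_nth)
  have y1: "ratf vec_coords E (\<lambda>y. y$1)" and y2: "ratf vec_coords E (\<lambda>y. y$2)"
    by (rule ratf_poly, rule polyfun_ventry)+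
  show "ratf vec_coords E (\<lambda>y. 2 * c y + e y * y $ 1)"
    by (intro ratf_add[OF assms(1)] ratf_mult[OF ratf_const assms(2)] ratf_mult[OF assms(3) y1])
  show "ratf vec_coords E (\<lambda>y. (c y)\<^sup>2 + c y * e y * y $ 1 + (e y)\<^sup>2 * y $ 2)"
    by (intro ratf_add[OF assms(1)] ratf_mult[OF ratf_mult[OF assms(2,3)] y1]
        ratf_mult[OF ratf_pow[OF assms(3)] y2] ratf_pow[OF assms(2)])
qed

lemma surj_Inv: "\<exists>M. Inv M = y"
  by (rule exI[of _ "compn y"]) simp

lemma dir1:
  assumes rmPhi: "rational_map mat_coords mat_coords \<Phi> q"
    and cc: "compatible_with_conjugation \<Phi>"
    and rmS: "rational_map vec_coords vec_coords S qS"
    and h4: "generically mat_coords (\<lambda>M. q M \<noteq> 0 \<and> qS (Inv M) \<noteq> 0 \<and> Inv (\<Phi> M) = S (Inv M))"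
    and bir: "birational mat_coords mat_coords \<Phi> q"
  shows "birational vec_coords vec_coords S qS"
proof -
  note rq = rational_mapD(1)[OF rmPhi] and pq = rational_mapD(2)[OF rmPhi]
  obtain M0 where q0: "q M0 \<noteq> 0" using rational_mapD(3)[OF rmPhi] by blast
  note rS = rational_mapD(1)[OF rmS] and pqS = rational_mapD(2)[OF rmS]
  obtain y0 where qS0: "qS y0 \<noteq> 0" using rational_mapD(3)[OF rmS] by blast
  note H4 = hyp4_upg[OF rq pq q0 rS pqS qS0 h4]
  note upg = compat_upg[OF rq pq q0 cc]
  obtain P qP where rmP: "rational_map mat_coords mat_coords P qP"
    and Ra: "generically mat_coords (\<lambda>M. q M \<noteq> 0 \<and> qP (\<Phi> M) \<noteq> 0 \<and> P (\<Phi> M) = M)"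
    and Rb: "generically mat_coords (\<lambda>N. qP N \<noteq> 0 \<and> q (P N) \<noteq> 0 \<and> \<Phi> (P N) = N)"
    using bir unfolding birational_def by blast
  note rP = rational_mapD(1)[OF rmP] and pqP = rational_mapD(2)[OF rmP]
  obtain N0 where qP0: "qP N0 \<noteq> 0" using rational_mapD(3)[OF rmP] by blast
  have domPhi: "domr mat_coords mat_coords q \<Phi>"
    by (rule dom_rinv[OF lines_mat pq rq, of P], rule gen_mono[OF Rb]) auto
  have domP: "domr mat_coords mat_coords qP P"
    by (rule dom_rinv[OF lines_mat pqP rP, of \<Phi>], rule gen_mono[OF Ra]) auto
  have ccP: "compatible_with_conjugation P"
    unfolding compatible_with_conjugation_def
  proof (intro allI impI)
    fix A :: mat2 assume iA: "invertible A"
    define Ai where "Ai = matrix_inv A"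
    have inv: "A ** Ai = mat 1" "Ai ** A = mat 1" unfolding Ai_def using inv_props[OF iA] by auto
    have dc: "domr mat_coords mat_coords (\<lambda>x. 1) (\<lambda>M. A ** M ** Ai)"
      by (rule dom_surj[OF ratm_conj, where g="\<lambda>M. Ai ** M ** A"])
         (simp add: matrix_mul_assoc inv cancel_r[OF inv(1)])
    have g1: "generically mat_coords (\<lambda>M. q (A ** M ** Ai) \<noteq> 0 \<and> qP (\<Phi> (A ** M ** Ai)) \<noteq> 0 \<and> P (\<Phi> (A ** M ** Ai)) = A ** M ** Ai)"
      by (rule gen_pull[OF dc Ra])
    have g2: "generically mat_coords (\<lambda>N. q (A ** P N ** Ai) \<noteq> 0 \<and> qP (\<Phi> (A ** P N ** Ai)) \<noteq> 0 \<and> P (\<Phi> (A ** P N ** Ai)) = A ** P N ** Ai)"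
      by (rule gen_pull[OF domP g1])
    show "generically mat_coords (\<lambda>N. A ** P N ** matrix_inv A = P (A ** N ** matrix_inv A))"
      unfolding Ai_def[symmetric]
    proof (rule gen_mono[OF gen_conj[OF lines_mat Rb g2]])
      fix N assume a: "(qP N \<noteq> 0 \<and> q (P N) \<noteq> 0 \<and> \<Phi> (P N) = N) \<and>
        q (A ** P N ** Ai) \<noteq> 0 \<and> qP (\<Phi> (A ** P N ** Ai)) \<noteq> 0 \<and> P (\<Phi> (A ** P N ** Ai)) = A ** P N ** Ai"
      have "A ** \<Phi> (P N) ** Ai = \<Phi> (A ** P N ** Ai)"
        using upg[OF iA, of "P N"] a unfolding Ai_def by simp
      hence "A ** N ** Ai = \<Phi> (A ** P N ** Ai)" using a by simp
      thus "A ** P N ** Ai = P (A ** N ** Ai)" using a by simp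
    qed
  qed
  obtain c e E' where pE': "polyfun vec_coords E'" and E'0: "\<exists>y. E' y \<noteq> 0"
    and rc: "ratf vec_coords E' c" and re: "ratf vec_coords E' e"
    and stP: "\<And>N. qP N \<noteq> 0 \<and> N$2$1 \<noteq> 0 \<and> E' (Inv N) \<noteq> 0 \<Longrightarrow> P N = lin (c (Inv N)) (e (Inv N)) N"
    using struct_thm[OF rP pqP qP0 ccP] by blast
  define T where "T = (\<lambda>y. FF (c y) (e y) y)"
  have rT: "ratm vec_coords vec_coords E' T" unfolding T_def by (rule ratm_FF[OF pE' rc re])
  obtain yE where yE: "E' yE \<noteq> 0" using E'0 by blast
  obtain nT where rmT: "rational_map vec_coords vec_coords T (\<lambda>y. E' y ^ nT)"
    using ratm_rational_map[OF finite_vec_coords pE' yE rT] by blast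
  have gE': "generically vec_coords (\<lambda>y. E' y \<noteq> 0)" by (rule gen_poly[OF pE' yE])
  have gqS: "generically vec_coords (\<lambda>y. qS y \<noteq> 0)" by (rule gen_poly[OF pqS qS0])
  have ga: "generically mat_coords (\<lambda>N. E' (Inv N) \<noteq> 0)" by (rule gen_pull[OF dom_Inv gE'])
  have gb0: "generically mat_coords (\<lambda>N. qS (Inv N) \<noteq> 0)" by (rule gen_pull[OF dom_Inv gqS])
  have gb: "generically mat_coords (\<lambda>N. qS (Inv (P N)) \<noteq> 0)" by (rule gen_pull[OF domP gb0])
  obtain kS mS where pkS: "polyfun vec_coords kS" and kS: "\<forall>y. E' y \<noteq> 0 \<longrightarrow> qS (T y) = kS y / E' y ^ mS"
    using ratf_den_comp[OF pE' rT pqS] by blast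
  define D1 where "D1 = (\<lambda>y. E' y * kS y)"
  have pD1: "polyfun vec_coords D1" unfolding D1_def using pE' pkS by (rule polyfun.mult)
  have rST: "ratm vec_coords vec_coords D1 (\<lambda>y. S (T y))"
    unfolding D1_def by (rule ratm_comp[OF pE' rT rS pkS kS])
  have gN: "generically mat_coords (\<lambda>N. D1 (Inv N) \<noteq> 0 \<and> S (T (Inv N)) = Inv N)"
  proof (rule gen_mono[OF gen_conj[OF lines_mat Rb gen_conj[OF lines_mat gen_e21 gen_conj[OF lines_mat ga gb]]]])
    fix N assume a: "(qP N \<noteq> 0 \<and> q (P N) \<noteq> 0 \<and> \<Phi> (P N) = N) \<and> N$2$1 \<noteq> 0 \<and> E' (Inv N) \<noteq> 0 \<and> qS (Inv (P N)) \<noteq> 0"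
    define y where "y = Inv N"
    have PN: "P N = lin (c y) (e y) N" using stP a unfolding y_def by blast
    have IPN: "Inv (P N) = T y" unfolding PN L1 T_def y_def ..
    have "Inv (\<Phi> (P N)) = S (Inv (P N))" using H4 a by blast
    hence STy: "S (T y) = y" using a IPN unfolding y_def by simp
    have "qS (T y) \<noteq> 0" using a IPN by simp
    hence "kS y \<noteq> 0" using kS a unfolding y_def by auto
    thus "D1 (Inv N) \<noteq> 0 \<and> S (T (Inv N)) = Inv N" using a STy unfolding D1_def y_def by simp
  qed
  have ST: "S (T y) = y" if "D1 y \<noteq> 0" for y
    by (rule rat_eq_vec_via[OF lines_mat pD1 rST ratm_idD ratm_Inv surj_Inv gN that])
  obtain Ns where "D1 (Inv Ns) \<noteq> 0" using gen_ex[OF gN] by blast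
  hence gD1: "generically vec_coords (\<lambda>y. D1 y \<noteq> 0)" by (rule gen_poly[OF pD1])
  have genST: "generically vec_coords (\<lambda>y. E' y ^ nT \<noteq> 0 \<and> qS (T y) \<noteq> 0 \<and> S (T y) = y)"
  proof (rule gen_mono[OF gD1])
    fix y assume "D1 y \<noteq> 0"
    thus "E' y ^ nT \<noteq> 0 \<and> qS (T y) \<noteq> 0 \<and> S (T y) = y"
      using ST kS unfolding D1_def by auto
  qed
  obtain kE mE where pkE: "polyfun vec_coords kE" and kE: "\<forall>x. qS x \<noteq> 0 \<longrightarrow> E' (S x) = kE x / qS x ^ mE"
    using ratf_den_comp[OF pqS rS pE'] by blast
  define D2 where "D2 = (\<lambda>x. qS x * kE x)"
  have pD2: "polyfun vec_coords D2" unfolding D2_def using pqS pkE by (rule polyfun.mult)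
  have rTS: "ratm vec_coords vec_coords D2 (\<lambda>x. T (S x))"
    unfolding D2_def by (rule ratm_comp[OF pqS rS rT pkE kE])
  have gPhi: "generically mat_coords (\<lambda>M. \<Phi> M $ 2 $ 1 \<noteq> 0 \<and> E' (Inv (\<Phi> M)) \<noteq> 0)"
    by (rule gen_pull[OF domPhi gen_conj[OF lines_mat gen_e21 ga]])
  have gM: "generically mat_coords (\<lambda>M. D2 (Inv M) \<noteq> 0 \<and> T (S (Inv M)) = Inv M)"
  proof (rule gen_mono[OF gen_conj[OF lines_mat Ra gen_conj[OF lines_mat gb0 gPhi]]])
    fix M assume a: "(q M \<noteq> 0 \<and> qP (\<Phi> M) \<noteq> 0 \<and> P (\<Phi> M) = M) \<and> qS (Inv M) \<noteq> 0 \<and>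
      \<Phi> M $ 2 $ 1 \<noteq> 0 \<and> E' (Inv (\<Phi> M)) \<noteq> 0"
    define x where "x = Inv M"
    have IN: "Inv (\<Phi> M) = S x" using H4 a unfolding x_def by blast
    have PN: "P (\<Phi> M) = lin (c (S x)) (e (S x)) (\<Phi> M)" using stP[of "\<Phi> M"] a IN by simp
    have "Inv (P (\<Phi> M)) = T (S x)" unfolding PN L1 IN T_def ..
    hence TSx: "T (S x) = x" using a unfolding x_def by simp
    have "E' (S x) \<noteq> 0" using a IN by simp
    hence "kE x \<noteq> 0" using kE a unfolding x_def by auto
    thus "D2 (Inv M) \<noteq> 0 \<and> T (S (Inv M)) = Inv M" using a TSx unfolding D2_def x_def by simp
  qed
  have TS: "T (S x) = x" if "D2 x \<noteq> 0" for x
    by (rule rat_eq_vec_via[OF lines_mat pD2 rTS ratm_idD ratm_Inv surj_Inv gM that])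
  obtain Ms where "D2 (Inv Ms) \<noteq> 0" using gen_ex[OF gM] by blast
  hence gD2: "generically vec_coords (\<lambda>y. D2 y \<noteq> 0)" by (rule gen_poly[OF pD2])
  have genTS: "generically vec_coords (\<lambda>x. qS x \<noteq> 0 \<and> E' (S x) ^ nT \<noteq> 0 \<and> T (S x) = x)"
  proof (rule gen_mono[OF gD2])
    fix x assume "D2 x \<noteq> 0"
    thus "qS x \<noteq> 0 \<and> E' (S x) ^ nT \<noteq> 0 \<and> T (S x) = x"
      using TS kE unfolding D2_def by auto
  qed
  show ?thesis unfolding birational_def
    by (rule exI[of _ T], rule exI[of _ "\<lambda>y. E' y ^ nT"]) (use rmT genST genTS in blast)
qed




lemma ratm_mono:
  assumes "polyfun CX E" "ratm CX CY D f"
  shows "ratm CX CY (\<lambda>x. D x * E x) f"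
  using assms unfolding ratm_def by (auto intro: ratf_mono)

lemma ratm_mono2:
  assumes "polyfun CX E" "ratm CX CY D f"
  shows "ratm CX CY (\<lambda>x. E x * D x) f"
  using assms unfolding ratm_def by (auto intro: ratf_mono2)

lemma dir2:
  assumes rmPhi: "rational_map mat_coords mat_coords \<Phi> q"
    and cc: "compatible_with_conjugation \<Phi>"
    and rmS: "rational_map vec_coords vec_coords S qS"
    and h4: "generically mat_coords (\<lambda>M. q M \<noteq> 0 \<and> qS (Inv M) \<noteq> 0 \<and> Inv (\<Phi> M) = S (Inv M))"
    and bir: "birational vec_coords vec_coords S qS"
  shows "birational mat_coords mat_coords \<Phi> q"
proof -
  note rq = rational_mapD(1)[OF rmPhi] and pq = rational_mapD(2)[OF rmPhi]
  obtain M0 where q0: "q M0 \<noteq> 0" using rational_mapD(3)[OF rmPhi] by blast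
  note rS = rational_mapD(1)[OF rmS] and pqS = rational_mapD(2)[OF rmS]
  obtain y0 where qS0: "qS y0 \<noteq> 0" using rational_mapD(3)[OF rmS] by blast
  note H4 = hyp4_upg[OF rq pq q0 rS pqS qS0 h4]
  obtain T qT where rmT: "rational_map vec_coords vec_coords T qT"
    and R1: "generically vec_coords (\<lambda>x. qS x \<noteq> 0 \<and> qT (S x) \<noteq> 0 \<and> T (S x) = x)"
    and R2: "generically vec_coords (\<lambda>y. qT y \<noteq> 0 \<and> qS (T y) \<noteq> 0 \<and> S (T y) = y)"
    using bir unfolding birational_def by blast
  note rT = rational_mapD(1)[OF rmT] and pqT = rational_mapD(2)[OF rmT]
  have domT: "domr vec_coords vec_coords qT T"
    by (rule dom_rinv[OF lines_vec pqT rT, of S], rule gen_mono[OF R1]) auto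
  obtain a b E where pE: "polyfun vec_coords E" and E0: "\<exists>y. E y \<noteq> 0"
    and ra: "ratf vec_coords E a" and rb: "ratf vec_coords E b"
    and st: "\<And>M. q M \<noteq> 0 \<and> M$2$1 \<noteq> 0 \<and> E (Inv M) \<noteq> 0 \<Longrightarrow> \<Phi> M = lin (a (Inv M)) (b (Inv M)) M"
    using struct_thm[OF rq pq q0 cc] by blast
  obtain yE where yE: "E yE \<noteq> 0" using E0 by blast
  have gE: "generically vec_coords (\<lambda>y. E y \<noteq> 0)" by (rule gen_poly[OF pE yE])
  have gqS: "generically vec_coords (\<lambda>y. qS y \<noteq> 0)" by (rule gen_poly[OF pqS qS0])
  have gq: "generically mat_coords (\<lambda>M. q M \<noteq> 0)" by (rule gen_poly[OF pq q0])
  define D3 where "D3 = (\<lambda>y. qS y * E y)"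
  have pD3: "polyfun vec_coords D3" unfolding D3_def using pqS pE by (rule polyfun.mult)
  have rS3: "ratm vec_coords vec_coords D3 S" unfolding D3_def by (rule ratm_mono[OF pE rS])
  have rF3: "ratm vec_coords vec_coords D3 (\<lambda>y. FF (a y) (b y) y)"
    unfolding D3_def by (rule ratm_mono2[OF pqS ratm_FF[OF pE ra rb]])
  have g3: "generically mat_coords (\<lambda>M. D3 (Inv M) \<noteq> 0 \<and> S (Inv M) = FF (a (Inv M)) (b (Inv M)) (Inv M))"
  proof (rule gen_mono[OF gen_conj[OF lines_mat gq gen_conj[OF lines_mat gen_e21
          gen_conj[OF lines_mat gen_pull[OF dom_Inv gE] gen_pull[OF dom_Inv gqS]]]]])
    fix M assume a: "q M \<noteq> 0 \<and> M$2$1 \<noteq> 0 \<and> E (Inv M) \<noteq> 0 \<and> qS (Inv M) \<noteq> 0"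
    have "S (Inv M) = Inv (\<Phi> M)" using H4 a by simp
    also have "\<dots> = FF (a (Inv M)) (b (Inv M)) (Inv M)" using st[of M] a L1 by simp
    finally show "D3 (Inv M) \<noteq> 0 \<and> S (Inv M) = FF (a (Inv M)) (b (Inv M)) (Inv M)"
      using a unfolding D3_def by simp
  qed
  have SF: "S y = FF (a y) (b y) y" if "qS y \<noteq> 0" "E y \<noteq> 0" for y
    by (rule rat_eq_vec_via[OF lines_mat pD3 rS3 rF3 ratm_Inv surj_Inv g3]) (use that in \<open>simp add: D3_def\<close>)
  have bnz: "\<exists>y. E y \<noteq> 0 \<and> b y \<noteq> 0"
  proof (rule ccontr)
    assume "\<not> ?thesis"
    hence nb: "\<And>y. E y \<noteq> 0 \<Longrightarrow> b y = 0" by blast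
    define W where "W = (\<lambda>y::vec2. y$1 ^ 2 - 4 * y$2)"
    have pW: "polyfun vec_coords W" unfolding W_def
      by (intro polyfun_diff polyfun_pow polyfun_cmult polyfun_ventry)
    have "generically vec_coords (\<lambda>y. W y = 0)"
    proof (rule gen_mono[OF gen_conj[OF lines_vec R2 pullback[OF domT gen_conj[OF lines_vec gqS gE]]]])
      fix y assume a: "(qT y \<noteq> 0 \<and> qS (T y) \<noteq> 0 \<and> S (T y) = y) \<and> qT y \<noteq> 0 \<and> qS (T y) \<noteq> 0 \<and> E (T y) \<noteq> 0"
      have "y = FF (a (T y)) (b (T y)) (T y)" using SF[of "T y"] a by simp
      also have "\<dots> = FF (a (T y)) 0 (T y)" using nb a by simp
      finally have yF: "y = FF (a (T y)) 0 (T y)" .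
      have "y $ 1 = 2 * a (T y)" using arg_cong[OF yF, of "\<lambda>v. v$1"] by simp
      moreover have "y $ 2 = (a (T y))^2" using arg_cong[OF yF, of "\<lambda>v. v$2"] by simp
      ultimately show "W y = 0" unfolding W_def by (simp add: power2_eq_square)
    qed
    hence "W (vector [0, 1]) = 0" by (rule vanish[OF lines_vec pW])
    thus False unfolding W_def by simp
  qed
  then obtain yb where yb: "E yb \<noteq> 0" "b yb \<noteq> 0" by blast
  have gab: "generically vec_coords (\<lambda>y. E y \<noteq> 0 \<and> b y \<noteq> 0)" by (rule gen_ratf_nz[OF pE rb yb])
  define Y where "Y = (\<lambda>N. T (Inv N))"
  define D0 where "D0 = (\<lambda>N. 1 * qT (Inv N))"
  have pk0: "polyfun mat_coords (\<lambda>N. qT (Inv N))" by (rule polyfun_comp[OF ratm_Inv pqT])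
  have pD0: "polyfun mat_coords D0" unfolding D0_def using pk0 by (intro polyfun.mult polyfun.const)
  have rY: "ratm mat_coords vec_coords D0 Y"
    unfolding D0_def Y_def by (rule ratm_comp[OF polyfun.const ratm_Inv rT pk0, where m=0]) simp
  obtain k1 m1 where pk1: "polyfun mat_coords k1" and k1: "\<forall>N. D0 N \<noteq> 0 \<longrightarrow> E (Y N) = k1 N / D0 N ^ m1"
    using ratf_den_comp[OF pD0 rY pE] by blast
  define D1 where "D1 = (\<lambda>N. D0 N * k1 N)"
  have pD1: "polyfun mat_coords D1" unfolding D1_def using pD0 pk1 by (rule polyfun.mult)
  have raY: "ratf mat_coords D1 (\<lambda>N. a (Y N))" unfolding D1_def by (rule ratf_comp[OF pD0 rY ra pk1 k1])
  have rbY: "ratf mat_coords D1 (\<lambda>N. b (Y N))" unfolding D1_def by (rule ratf_comp[OF pD0 rY rb pk1 k1])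
  obtain nb hb where phb: "polyfun mat_coords hb" and hb: "\<forall>N. D1 N \<noteq> 0 \<longrightarrow> b (Y N) = hb N / D1 N ^ nb"
    using rbY unfolding ratf_def by blast
  define D2 where "D2 = (\<lambda>N. D1 N * hb N)"
  have pD2: "polyfun mat_coords D2" unfolding D2_def using pD1 phb by (rule polyfun.mult)
  have rinv: "ratf mat_coords D2 (\<lambda>N. 1 / b (Y N))" unfolding D2_def
    by (rule ratf_div_rep[OF pD1 phb ratf_const hb])
  have raY2: "ratf mat_coords D2 (\<lambda>N. a (Y N))" unfolding D2_def by (rule ratf_mono[OF phb raY])
  have ralpha: "ratf mat_coords D2 (\<lambda>N. - a (Y N) / b (Y N))"
    by (rule ratf_fcong[OF _ ratf_mult[OF ratf_minus[OF raY2] rinv]]) simp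
  have D2iff: "D2 N \<noteq> 0 \<longleftrightarrow> qT (Inv N) \<noteq> 0 \<and> E (Y N) \<noteq> 0 \<and> b (Y N) \<noteq> 0" for N
  proof
    assume "D2 N \<noteq> 0"
    hence "D0 N \<noteq> 0" "k1 N \<noteq> 0" "hb N \<noteq> 0" unfolding D2_def D1_def by auto
    thus "qT (Inv N) \<noteq> 0 \<and> E (Y N) \<noteq> 0 \<and> b (Y N) \<noteq> 0"
      using k1 hb \<open>D2 N \<noteq> 0\<close> unfolding D0_def D2_def by auto
  next
    assume a: "qT (Inv N) \<noteq> 0 \<and> E (Y N) \<noteq> 0 \<and> b (Y N) \<noteq> 0"
    hence d0: "D0 N \<noteq> 0" unfolding D0_def by simp
    hence "k1 N \<noteq> 0" using k1 a by auto
    hence d1: "D1 N \<noteq> 0" using d0 unfolding D1_def by simp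
    hence "hb N \<noteq> 0" using hb a by auto
    thus "D2 N \<noteq> 0" using d1 unfolding D2_def by simp
  qed
  define \<Psi> where "\<Psi> = (\<lambda>N. lin (- a (Y N) / b (Y N)) (1 / b (Y N)) N)"
  have rPsi: "ratm mat_coords mat_coords D2 \<Psi>"
  proof (rule ratm_matI2; unfold \<Psi>_def lin_def mk_nth)
    have e: "ratf mat_coords D2 (\<lambda>N. N $ i $ j)" for i j by (rule ratf_poly, rule polyfun_entry)
    show "ratf mat_coords D2 (\<lambda>x. - a (Y x) / b (Y x) + 1 / b (Y x) * x $ 1 $ 1)"
      by (intro ratf_add[OF pD2] ralpha ratf_mult[OF rinv e])
    show "ratf mat_coords D2 (\<lambda>x. 1 / b (Y x) * x $ 1 $ 2)" by (intro ratf_mult[OF rinv e])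
    show "ratf mat_coords D2 (\<lambda>x. 1 / b (Y x) * x $ 2 $ 1)" by (intro ratf_mult[OF rinv e])
    show "ratf mat_coords D2 (\<lambda>x. - a (Y x) / b (Y x) + 1 / b (Y x) * x $ 2 $ 2)"
      by (intro ratf_add[OF pD2] ralpha ratf_mult[OF rinv e])
  qed
  have GA: "generically mat_coords (\<lambda>M. q M \<noteq> 0 \<and> M$2$1 \<noteq> 0 \<and> (E (Inv M) \<noteq> 0 \<and> b (Inv M) \<noteq> 0) \<and>
      (qS (Inv M) \<noteq> 0 \<and> qT (S (Inv M)) \<noteq> 0 \<and> T (S (Inv M)) = Inv M))"
    by (intro gen_conj[OF lines_mat] gq gen_e21 gen_pull[OF dom_Inv gab] gen_pull[OF dom_Inv R1])
  have PP: "D2 (\<Phi> M) \<noteq> 0 \<and> \<Psi> (\<Phi> M) = M"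
    if a: "q M \<noteq> 0 \<and> M$2$1 \<noteq> 0 \<and> (E (Inv M) \<noteq> 0 \<and> b (Inv M) \<noteq> 0) \<and>
      (qS (Inv M) \<noteq> 0 \<and> qT (S (Inv M)) \<noteq> 0 \<and> T (S (Inv M)) = Inv M)" for M
  proof -
    define x where "x = Inv M"
    have PM: "\<Phi> M = lin (a x) (b x) M" using st[of M] a unfolding x_def by simp
    have IPM: "Inv (\<Phi> M) = S x" using H4 a unfolding x_def by simp
    have YPM: "Y (\<Phi> M) = x" unfolding Y_def IPM using a unfolding x_def by simp
    have "D2 (\<Phi> M) \<noteq> 0" unfolding D2iff YPM IPM using a unfolding x_def by simp
    moreover have "\<Psi> (\<Phi> M) = M" unfolding \<Psi>_def YPM unfolding PM
      by (rule L2a) (use a x_def in simp)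
    ultimately show ?thesis by simp
  qed
  obtain Ms where Ms: "q Ms \<noteq> 0 \<and> Ms$2$1 \<noteq> 0 \<and> (E (Inv Ms) \<noteq> 0 \<and> b (Inv Ms) \<noteq> 0) \<and>
      (qS (Inv Ms) \<noteq> 0 \<and> qT (S (Inv Ms)) \<noteq> 0 \<and> T (S (Inv Ms)) = Inv Ms)"
    using gen_ex[OF GA] by blast
  have D2s: "D2 (\<Phi> Ms) \<noteq> 0" using PP[OF Ms] by simp
  obtain nP where rmP: "rational_map mat_coords mat_coords \<Psi> (\<lambda>N. D2 N ^ nP)"
    using ratm_rational_map[OF finite_mat_coords pD2 D2s rPsi] by blast
  have genA: "generically mat_coords (\<lambda>M. q M \<noteq> 0 \<and> D2 (\<Phi> M) ^ nP \<noteq> 0 \<and> \<Psi> (\<Phi> M) = M)"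
    by (rule gen_mono[OF GA]) (use PP in simp)
  obtain lq hq where phq: "polyfun mat_coords hq" and hq: "\<forall>N. D2 N \<noteq> 0 \<longrightarrow> q (\<Psi> N) = hq N / D2 N ^ lq"
    using ratf_comp_poly[OF pD2 rPsi pq] unfolding ratf_def by blast
  define W where "W = (\<lambda>N. D2 N * hq N)"
  have pW: "polyfun mat_coords W" unfolding W_def using pD2 phq by (rule polyfun.mult)
  have "q (\<Psi> (\<Phi> Ms)) \<noteq> 0" using PP[OF Ms] Ms by simp
  hence "hq (\<Phi> Ms) \<noteq> 0" using hq D2s by auto
  hence "W (\<Phi> Ms) \<noteq> 0" unfolding W_def using D2s by simp
  hence gW: "generically mat_coords (\<lambda>N. W N \<noteq> 0)" by (rule gen_poly[OF pW])
  have genB: "generically mat_coords (\<lambda>N. D2 N ^ nP \<noteq> 0 \<and> q (\<Psi> N) \<noteq> 0 \<and> \<Phi> (\<Psi> N) = N)"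
  proof (rule gen_mono[OF gen_conj[OF lines_mat gW gen_conj[OF lines_mat gen_e21 gen_pull[OF dom_Inv R2]]]])
    fix N assume a: "W N \<noteq> 0 \<and> N$2$1 \<noteq> 0 \<and> qT (Inv N) \<noteq> 0 \<and> qS (T (Inv N)) \<noteq> 0 \<and> S (T (Inv N)) = Inv N"
    have d2: "D2 N \<noteq> 0" and "hq N \<noteq> 0" using a unfolding W_def by auto
    hence qPN: "q (\<Psi> N) \<noteq> 0" using hq by auto
    define y where "y = Y N"
    have yy: "E y \<noteq> 0" "b y \<noteq> 0" using d2 unfolding D2iff y_def by auto
    have "FF (a y) (b y) y = S y" using SF[of y] yy a unfolding y_def Y_def by simp
    also have "\<dots> = Inv N" using a unfolding y_def Y_def by simp
    finally have IP: "Inv (\<Psi> N) = y" unfolding \<Psi>_def y_def[symmetric] by (rule L3[OF yy(2)])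
    have "(\<Psi> N) $ 2 $ 1 \<noteq> 0" unfolding \<Psi>_def lin_def using a yy y_def by simp
    hence "\<Phi> (\<Psi> N) = lin (a y) (b y) (\<Psi> N)" using st[of "\<Psi> N"] qPN IP yy by simp
    also have "\<dots> = N" unfolding \<Psi>_def y_def[symmetric] by (rule L2b[OF yy(2)])
    finally show "D2 N ^ nP \<noteq> 0 \<and> q (\<Psi> N) \<noteq> 0 \<and> \<Phi> (\<Psi> N) = N" using d2 qPN by simp
  qed
  show ?thesis unfolding birational_def
    by (rule exI[of _ \<Psi>], rule exI[of _ "\<lambda>N. D2 N ^ nP"]) (use rmP genA genB in blast)
qed


theorem proposition2p27:
  fixes \<Phi> :: "complex^2^2 \<Rightarrow> complex^2^2" and q :: "complex^2^2 \<Rightarrow> complex"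
    and S :: "complex^2 \<Rightarrow> complex^2" and qS :: "complex^2 \<Rightarrow> complex"
  assumes "rational_map mat_coords mat_coords \<Phi> q"
    and "compatible_with_conjugation \<Phi>"
    and "rational_map vec_coords vec_coords S qS"
    and "generically mat_coords (\<lambda>M. q M \<noteq> 0 \<and> qS (Inv M) \<noteq> 0 \<and> Inv (\<Phi> M) = S (Inv M))"
  shows "birational mat_coords mat_coords \<Phi> q \<longleftrightarrow> birational vec_coords vec_coords S qS"
  using dir1[OF assms] dir2[OF assms] by blast

end
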